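(* Let $M\ge1$ and $q\in[q_G,M+1]$. The sequence $\alpha(q)$ is irreducible if and only if $q\notin(q_L(\mathbf b),q_R(\mathbf b)]$ for every fundamental word $\mathbf b\in\mathcal A_M$.
   Context: Order and word operations. $\Omega_M=\{0,\dots,M\}^{\mathbb N}$, with lexicographic order; words are compared via $\mathbf c\prec\mathbf d$ iff $\mathbf c0^\infty\prec\mathbf d0^\infty$. $\sigma$ is the left shift. For a word $c_1\dots c_k$: - if $c_k<M$, then $c_1\dots c_k^+=c_1\dots c_{k-1}(c_k+1)$; - if $c_k>0$, then $c_1\dots c_k^-=c_1\dots c_{k-1}(c_k-1)$; - $\overline{c_1\dots c_k}=(M-c_1)\dots(M-c_k)$, and $\overline{(c_i)}=(M-c_i)$ for sequences. Quasi-greedy expansion. For $q\in(1,M+1]$, $\alpha(q)$ is the lexicographically largest $(a_i)\in\Omega_M$ not ending in $0^\infty$ with $\sum a_iq^{-i}=1$. Irreducible sequences. Let $\mathbf V=\{(c_i)\in\Omega_M:\overline{(c_i)}\preceq\sigma^n((c_i))\preceq(c_i)\ \forall n\ge0\}$. A sequence $(a_i)\in\mathbf V$ is irreducible if for every $j\in\mathbb N$: whenever $a_j>0$ and $(a_1\dots a_j^-)^\infty\in\mathbf V$, we have $a_1\dots a_j(\overline{a_1\dots a_j}^+)^\infty\prec(a_i)$. (In particular, an irreducible sequence lies in $\mathbf V$.) Fundamental words. A word $a_1\dots a_m$ ($m\ge2$) is fundamental if $\overline{a_1\dots a_{m-i}}\preceq a_{i+1}\dots a_m\prec a_1\dots a_{m-i}$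 for $1\le i<m$. When $M\ge2$, a letter $a_1$ is fundamental if $M-a_1\le a_1<M$. $\mathcal A_M$ denotes the set of fundamental words. For $\mathbf b\in\mathcal A_M$, $q_L(\mathbf b),q_R(\mathbf b)$ are given by $\alpha(q_L(\mathbf b))=\mathbf b^\infty$ and $\alpha(q_R(\mathbf b))=\mathbf b^+(\overline{\mathbf b})^\infty$. The base $q_G$. It is defined by $\alpha(q_G)=k^\infty$ if $M=2k$, and $\alpha(q_G)=((k+1)k)^\infty$ if $M=2k+1$. *)

theory Defs
  imports Complex_Main
begin

text \<open>Conventions: a sequence (c_i)_{i>=1} in Omega_M is a function c :: nat => nat with
  c 0 = c_1, c 1 = c_2, ...; a word c_1...c_k is a list [c_1,...,c_k].\<close>

definition seqs :: "nat \<Rightarrow> (nat \<Rightarrow> nat) set" where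
  "seqs M = {c. \<forall>i. c i \<le> M}"

definition lex_less :: "(nat \<Rightarrow> nat) \<Rightarrow> (nat \<Rightarrow> nat) \<Rightarrow> bool" where
  "lex_less c d \<longleftrightarrow> (\<exists>n. (\<forall>i<n. c i = d i) \<and> c n < d n)"

definition lex_le :: "(nat \<Rightarrow> nat) \<Rightarrow> (nat \<Rightarrow> nat) \<Rightarrow> bool" where
  "lex_le c d \<longleftrightarrow> lex_less c d \<or> c = d"

definition ext0 :: "nat list \<Rightarrow> nat \<Rightarrow> nat" where
  "ext0 w = (\<lambda>i. if i < length w then w ! i else 0)"

definition wlex_less :: "nat list \<Rightarrow> nat list \<Rightarrow> bool" where
  "wlex_less u v \<longleftrightarrow> lex_less (ext0 u) (ext0 v)"

definition wlex_le :: "nat list \<Rightarrow> nat list \<Rightarrow> bool" where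
  "wlex_le u v \<longleftrightarrow> lex_le (ext0 u) (ext0 v)"

definition shift :: "nat \<Rightarrow> (nat \<Rightarrow> nat) \<Rightarrow> nat \<Rightarrow> nat" where
  "shift n c = (\<lambda>i. c (i + n))"

text \<open>periodic sequence w^infinity (w nonempty)\<close>
definition per :: "nat list \<Rightarrow> nat \<Rightarrow> nat" where
  "per w = (\<lambda>i. w ! (i mod length w))"

definition wapp :: "nat list \<Rightarrow> (nat \<Rightarrow> nat) \<Rightarrow> nat \<Rightarrow> nat" where
  "wapp w s = (\<lambda>i. if i < length w then w ! i else s (i - length w))"

definition pref :: "(nat \<Rightarrow> nat) \<Rightarrow> nat \<Rightarrow> nat list" where
  "pref a j = map a [0..<j]"

definition wplus :: "nat list \<Rightarrow> nat list" where
  "wplus w = butlast w @ [last w + 1]"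

definition wminus :: "nat list \<Rightarrow> nat list" where
  "wminus w = butlast w @ [last w - 1]"

definition wbar :: "nat \<Rightarrow> nat list \<Rightarrow> nat list" where
  "wbar M w = map (\<lambda>x. M - x) w"

definition sbar :: "nat \<Rightarrow> (nat \<Rightarrow> nat) \<Rightarrow> nat \<Rightarrow> nat" where
  "sbar M c = (\<lambda>i. M - c i)"

definition is_qg_exp :: "nat \<Rightarrow> real \<Rightarrow> (nat \<Rightarrow> nat) \<Rightarrow> bool" where
  "is_qg_exp M q a \<longleftrightarrow> a \<in> seqs M \<and> (\<forall>n. \<exists>i\<ge>n. a i \<noteq> 0)
     \<and> ((\<lambda>i. real (a i) / q ^ Suc i) sums 1)"

definition alpha :: "nat \<Rightarrow> real \<Rightarrow> nat \<Rightarrow> nat" where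
  "alpha M q = (THE a. is_qg_exp M q a \<and> (\<forall>b. is_qg_exp M q b \<longrightarrow> lex_le b a))"

definition V :: "nat \<Rightarrow> (nat \<Rightarrow> nat) set" where
  "V M = {c \<in> seqs M. \<forall>n. lex_le (sbar M c) (shift n c) \<and> lex_le (shift n c) c}"

definition irreducible_seq :: "nat \<Rightarrow> (nat \<Rightarrow> nat) \<Rightarrow> bool" where
  "irreducible_seq M a \<longleftrightarrow> a \<in> V M \<and>
     (\<forall>j\<ge>1. a (j - 1) > 0 \<and> per (wminus (pref a j)) \<in> V M \<longrightarrow>
        lex_less (wapp (pref a j) (per (wplus (wbar M (pref a j))))) a)"

definition fundamental :: "nat \<Rightarrow> nat list set" where
  "fundamental M = {w. set w \<subseteq> {0..M} \<and>
     ((length w \<ge> 2 \<and> (\<forall>i. 1 \<le> i \<and> i < length w \<longrightarrow>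
          wlex_le (wbar M (take (length w - i) w)) (drop i w) \<and>
          wlex_less (drop i w) (take (length w - i) w)))
      \<or> (M \<ge> 2 \<and> length w = 1 \<and> M - hd w \<le> hd w \<and> hd w < M))}"

definition qL :: "nat \<Rightarrow> nat list \<Rightarrow> real" where
  "qL M b = (THE q. 1 < q \<and> q \<le> real M + 1 \<and> alpha M q = per b)"

definition qR :: "nat \<Rightarrow> nat list \<Rightarrow> real" where
  "qR M b = (THE q. 1 < q \<and> q \<le> real M + 1 \<and>
                 alpha M q = wapp (wplus b) (per (wbar M b)))"

definition qG :: "nat \<Rightarrow> real" where
  "qG M = (THE q. 1 < q \<and> q \<le> real M + 1 \<and>
     alpha M q = (if even M then per [M div 2] else per [M div 2 + 1, M div 2]))"

end

theory Submission
  imports Defs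
begin

lemma lex_lessI: "(\<And>i. i < k \<Longrightarrow> x i = y i) \<Longrightarrow> x k < y k \<Longrightarrow> lex_less x y"
  unfolding lex_less_def by blast

lemma lex_less_irrefl: "\<not> lex_less x x"
  unfolding lex_less_def by auto

lemma lex_less_asym: "lex_less x y \<Longrightarrow> \<not> lex_less y x"
  unfolding lex_less_def
  by (metis less_asym linorder_neqE_nat)

lemma lex_less_trans: assumes "lex_less x y" "lex_less y z" shows "lex_less x z"
proof -
  obtain n where n: "\<forall>i<n. x i = y i" "x n < y n" using assms(1) unfolding lex_less_def by blast
  obtain m where m: "\<forall>i<m. y i = z i" "y m < z m" using assms(2) unfolding lex_less_def by blast
  show ?thesis
  proof (cases "n < m")
    case True then show ?thesis using n m by (intro lex_lessI[of "n"]) auto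
  next
    case False
    show ?thesis
    proof (cases "n = m")
      case True then show ?thesis using n m by (intro lex_lessI[of "n"]) auto
    next
      case False
      then have "m < n" using \<open>\<not> n < m\<close> by auto
      then show ?thesis using n m by (intro lex_lessI[of "m"]) auto
    qed
  qed
qed

lemma lex_total: "lex_less x y \<or> x = y \<or> lex_less y x"
proof (cases "x = y")
  case False
  then obtain k where "x k \<noteq> y k" by auto
  define n where "n = (LEAST k. x k \<noteq> y k)"
  have "x n \<noteq> y n" unfolding n_def by (rule LeastI[of _ k]) fact
  moreover have "\<forall>i<n. x i = y i" unfolding n_def using not_less_Least by blast
  ultimately show ?thesis unfolding lex_less_def
    by (metis linorder_neqE_nat)
qed simp

lemma lex_le_iff_not_less: "lex_le x y \<longleftrightarrow> \<not> lex_less y x"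
  unfolding lex_le_def using lex_total lex_less_asym lex_less_irrefl by metis

lemma lex_le_refl[simp]: "lex_le x x" by (simp add: lex_le_def)

lemma lex_le_trans: "lex_le x y \<Longrightarrow> lex_le y z \<Longrightarrow> lex_le x z"
  unfolding lex_le_def using lex_less_trans by blast

lemma lex_le_less_trans: "lex_le x y \<Longrightarrow> lex_less y z \<Longrightarrow> lex_less x z"
  unfolding lex_le_def using lex_less_trans by blast

lemma lex_less_le_trans: "lex_less x y \<Longrightarrow> lex_le y z \<Longrightarrow> lex_less x z"
  unfolding lex_le_def using lex_less_trans by blast

lemma lex_le_antisym: "lex_le x y \<Longrightarrow> lex_le y x \<Longrightarrow> x = y"
  unfolding lex_le_def using lex_less_asym by blast

lemma lex_less_imp_le: "lex_less x y \<Longrightarrow> lex_le x y" by (simp add: lex_le_def)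

lemma lex_le_digit: "lex_le x y \<Longrightarrow> (\<And>i. i < k \<Longrightarrow> x i = y i) \<Longrightarrow> x k \<le> y k"
  using lex_lessI[of k y x] lex_le_iff_not_less by fastforce

lemma lex_le_iff: "lex_le x y \<longleftrightarrow> (\<forall>k. (\<forall>i<k. x i = y i) \<longrightarrow> x k \<le> y k)"
proof
  assume "\<forall>k. (\<forall>i<k. x i = y i) \<longrightarrow> x k \<le> y k"
  then show "lex_le x y" unfolding lex_le_iff_not_less lex_less_def by (metis leD)
qed (auto intro: lex_le_digit)

lemma shift_shift[simp]: "shift m (shift n x) = shift (n + m) x"
  unfolding shift_def by (rule ext) (simp add: ac_simps)

lemma shift_0[simp]: "shift 0 x = x" unfolding shift_def by simp

lemma shift_apply[simp]: "shift n x i = x (i + n)" unfolding shift_def by simp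

lemma sbar_apply[simp]: "sbar M x i = M - x i" unfolding sbar_def by simp

lemma shift_sbar: "shift n (sbar M x) = sbar M (shift n x)"
  unfolding shift_def sbar_def by simp

lemma seqsD: "x \<in> seqs M \<Longrightarrow> x i \<le> M" unfolding seqs_def by auto

lemma shift_seqs: "x \<in> seqs M \<Longrightarrow> shift n x \<in> seqs M" unfolding seqs_def by auto

lemma sbar_sbar: "x \<in> seqs M \<Longrightarrow> sbar M (sbar M x) = x"
  unfolding sbar_def seqs_def by auto

lemma lex_le_shift:
  assumes "lex_le x y" "\<And>i. i < k \<Longrightarrow> x i = y i"
  shows "lex_le (shift k x) (shift k y)"
  unfolding lex_le_iff
proof (intro allI impI)
  fix j assume "\<forall>i<j. shift k x i = shift k y i"
  then have "\<And>i. i < j + k \<Longrightarrow> x i = y i" using assms(2)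
    by (metis add.commute add_less_imp_less_left linorder_not_less nat_le_iff_add shift_apply)
  then show "shift k x j \<le> shift k y j" using lex_le_digit[OF assms(1), of "j+k"] by simp
qed

lemma lex_less_sbar:
  assumes "x \<in> seqs M" "y \<in> seqs M" "lex_less x y"
  shows "lex_less (sbar M y) (sbar M x)"
proof -
  obtain n where n: "\<forall>i<n. x i = y i" "x n < y n" using assms(3) unfolding lex_less_def by blast
  have "M - y n < M - x n" using n(2) seqsD[OF assms(2), of n] by auto
  then show ?thesis using n by (intro lex_lessI[of n]) auto
qed

lemma lex_le_sbar:
  assumes "x \<in> seqs M" "y \<in> seqs M" "lex_le x y"
  shows "lex_le (sbar M y) (sbar M x)"
  using assms lex_less_sbar unfolding lex_le_def by blast

lemma sbar_seqs: "sbar M x \<in> seqs M" unfolding seqs_def sbar_def by auto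


lemma ext0_nth: "i < length w \<Longrightarrow> ext0 w i = w ! i" unfolding ext0_def by simp
lemma ext0_out: "length w \<le> i \<Longrightarrow> ext0 w i = 0" unfolding ext0_def by simp

lemma wless_nth:
  assumes "length u = L" "length v = L"
  shows "wlex_less u v \<longleftrightarrow> (\<exists>k<L. (\<forall>t<k. u!t = v!t) \<and> u!k < v!k)"
proof
  assume "wlex_less u v"
  then obtain n where n: "\<forall>i<n. ext0 u i = ext0 v i" "ext0 u n < ext0 v n"
    unfolding wlex_less_def lex_less_def by blast
  have "n < L" using n(2) assms ext0_out[of u n] ext0_out[of v n] by (cases "n < L") auto
  then show "\<exists>k<L. (\<forall>t<k. u!t = v!t) \<and> u!k < v!k" using n assms
    by (intro exI[of _ n]) (auto simp: ext0_nth)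
next
  assume "\<exists>k<L. (\<forall>t<k. u!t = v!t) \<and> u!k < v!k"
  then obtain k where k: "k < L" "\<forall>t<k. u!t = v!t" "u!k < v!k" by blast
  show "wlex_less u v" unfolding wlex_less_def
    using k assms by (intro lex_lessI[of k]) (auto simp: ext0_nth)
qed

lemma ext0_inj: "length u = length v \<Longrightarrow> ext0 u = ext0 v \<Longrightarrow> u = v"
  by (metis ext0_nth nth_equalityI)

lemma wle_nth:
  assumes "length u = L" "length v = L"
  shows "wlex_le u v \<longleftrightarrow> (\<forall>K<L. (\<forall>t<K. u!t = v!t) \<longrightarrow> u!K \<le> v!K)"
proof
  assume h: "wlex_le u v"
  show "\<forall>K<L. (\<forall>t<K. u!t = v!t) \<longrightarrow> u!K \<le> v!K"
  proof (intro allI impI)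
    fix K assume K: "K < L" "\<forall>t<K. u!t = v!t"
    have "ext0 u K \<le> ext0 v K"
      using h K assms unfolding wlex_le_def by (intro lex_le_digit) (auto simp: ext0_nth)
    then show "u!K \<le> v!K" using K assms by (simp add: ext0_nth)
  qed
next
  assume h: "\<forall>K<L. (\<forall>t<K. u!t = v!t) \<longrightarrow> u!K \<le> v!K"
  show "wlex_le u v"
  proof (cases "u = v")
    case True then show ?thesis by (simp add: wlex_le_def)
  next
    case False
    then obtain k where "k < L" "u!k \<noteq> v!k" using assms nth_equalityI by metis
    define n where "n = (LEAST k. k < L \<and> u!k \<noteq> v!k)"
    have n: "n < L" "u!n \<noteq> v!n" unfolding n_def using LeastI[of "\<lambda>k. k < L \<and> u!k \<noteq> v!k" k] \<open>k<L\<close> \<open>u!k \<noteq> v!k\<close> by auto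
    have "\<forall>t<n. u!t = v!t" unfolding n_def using not_less_Least n(1) n_def
      by (metis (mono_tags, lifting) order.strict_trans)
    then have "wlex_less u v" using n h assms by (subst wless_nth[OF assms]) (auto intro!: exI[of _ n] simp: le_neq_implies_less)
    then show ?thesis by (simp add: wlex_le_def wlex_less_def lex_le_def)
  qed
qed

lemma fund_len: "b \<in> fundamental M \<Longrightarrow> length b \<ge> 1"
  unfolding fundamental_def by auto

lemma fund_set: "b \<in> fundamental M \<Longrightarrow> t < length b \<Longrightarrow> b ! t \<le> M"
  unfolding fundamental_def by (auto dest!: nth_mem)

lemma fund_single:
  assumes "b \<in> fundamental M" "length b = 1"
  shows "M \<ge> 2 \<and> M - b!0 \<le> b!0 \<and> b!0 < M"
proof -
  have "b \<noteq> []" using assms(2) by auto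
  then show ?thesis using assms unfolding fundamental_def by (auto simp: hd_conv_nth)
qed

lemma fund_elim:
  assumes "b \<in> fundamental M" "2 \<le> length b" "1 \<le> i" "i < length b"
  shows "(\<exists>k<length b - i. (\<forall>t<k. b!(i+t) = b!t) \<and> b!(i+k) < b!k)
       \<and> (\<forall>K<length b - i. (\<forall>t<K. M - b!t = b!(i+t)) \<longrightarrow> M - b!K \<le> b!(i+K))"
proof -
  have h: "wlex_le (wbar M (take (length b - i) b)) (drop i b) \<and> wlex_less (drop i b) (take (length b - i) b)"
    using assms unfolding fundamental_def by auto
  let ?L = "length b - i"
  have l: "length (wbar M (take ?L b)) = ?L" "length (drop i b) = ?L" "length (take ?L b) = ?L"
    by (auto simp: wbar_def)
  have nth: "\<And>t. t < ?L \<Longrightarrow> wbar M (take ?L b) ! t = M - b!t \<and> drop i b ! t = b!(i+t) \<and> take ?L b ! t = b ! t"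
    using assms by (auto simp: wbar_def)
  have A: "\<forall>K<?L. (\<forall>t<K. wbar M (take ?L b) ! t = drop i b ! t) \<longrightarrow> wbar M (take ?L b) ! K \<le> drop i b ! K"
    using h l wle_nth by blast
  have B: "\<exists>k<?L. (\<forall>t<k. drop i b ! t = take ?L b ! t) \<and> drop i b ! k < take ?L b ! k"
    using h l wless_nth by blast
  have "\<forall>K<?L. (\<forall>t<K. M - b!t = b!(i+t)) \<longrightarrow> M - b!K \<le> b!(i+K)"
  proof (intro allI impI)
    fix K assume K: "K < ?L" "\<forall>t<K. M - b!t = b!(i+t)"
    then show "M - b!K \<le> b!(i+K)" using A nth[of K] nth by auto
  qed
  moreover have "\<exists>k<?L. (\<forall>t<k. b!(i+t) = b!t) \<and> b!(i+k) < b!k"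
  proof -
    obtain k where k: "k < ?L" "\<forall>t<k. drop i b ! t = take ?L b ! t" "drop i b ! k < take ?L b ! k" using B by blast
    then show ?thesis using nth[of k] nth by (intro exI[of _ k]) auto
  qed
  ultimately show ?thesis by blast
qed

lemma fund_intro:
  assumes "\<forall>t<length b. b!t \<le> M" "2 \<le> length b"
    "\<And>i. 1 \<le> i \<Longrightarrow> i < length b \<Longrightarrow> (\<exists>k<length b - i. (\<forall>t<k. b!(i+t) = b!t) \<and> b!(i+k) < b!k)
       \<and> (\<forall>K<length b - i. (\<forall>t<K. M - b!t = b!(i+t)) \<longrightarrow> M - b!K \<le> b!(i+K))"
  shows "b \<in> fundamental M"
proof -
  have set: "set b \<subseteq> {0..M}" using assms(1) by (auto simp: in_set_conv_nth)
  have "wlex_le (wbar M (take (length b - i) b)) (drop i b) \<and> wlex_less (drop i b) (take (length b - i) b)"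
    if i: "1 \<le> i" "i < length b" for i
  proof -
    let ?L = "length b - i"
    have l: "length (wbar M (take ?L b)) = ?L" "length (drop i b) = ?L" "length (take ?L b) = ?L"
      by (auto simp: wbar_def)
    have nth: "\<And>t. t < ?L \<Longrightarrow> wbar M (take ?L b) ! t = M - b!t \<and> drop i b ! t = b!(i+t) \<and> take ?L b ! t = b ! t"
      using i by (auto simp: wbar_def)
    obtain k where k: "k<?L" "\<forall>t<k. b!(i+t) = b!t" "b!(i+k) < b!k" using assms(3)[OF i] by blast
    have A: "\<forall>K<?L. (\<forall>t<K. M - b!t = b!(i+t)) \<longrightarrow> M - b!K \<le> b!(i+K)" using assms(3)[OF i] by blast
    have "wlex_less (drop i b) (take ?L b)"
      unfolding wless_nth[OF l(2,3)] using k nth[of k] nth by (intro exI[of _ k]) auto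
    moreover have "wlex_le (wbar M (take ?L b)) (drop i b)"
      unfolding wle_nth[OF l(1,2)]
    proof (intro allI impI)
      fix K assume K: "K < ?L" "\<forall>t<K. wbar M (take ?L b) ! t = drop i b ! t"
      then have "\<forall>t<K. M - b!t = b!(i+t)" using nth by auto
      then show "wbar M (take ?L b) ! K \<le> drop i b ! K" using A K nth[of K] by auto
    qed
    ultimately show ?thesis by blast
  qed
  then show ?thesis unfolding fundamental_def using set assms(2) by auto
qed


lemma per_apply: "per w i = w ! (i mod length w)" unfolding per_def by simp
lemma per_nth: "i < length w \<Longrightarrow> per w i = w ! i" unfolding per_def by simp
lemma per_mod: "per w (t + n) = per w (t + n mod length w)"
  unfolding per_def by (simp add: mod_add_right_eq)
lemma per_len: "per w (t + length w) = per w t"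
  unfolding per_def by simp
lemma per_len_mult: "per w (t + length w * c) = per w t"
  unfolding per_def by simp

lemma wapp_apply: "wapp w s i = (if i < length w then w!i else s (i - length w))"
  unfolding wapp_def by simp

lemma wplus_len[simp]: "w \<noteq> [] \<Longrightarrow> length (wplus w) = length w"
  unfolding wplus_def by simp
lemma wminus_len[simp]: "w \<noteq> [] \<Longrightarrow> length (wminus w) = length w"
  unfolding wminus_def by simp
lemma wbar_len[simp]: "length (wbar M w) = length w" unfolding wbar_def by simp
lemma wbar_nth: "t < length w \<Longrightarrow> wbar M w ! t = M - w ! t" unfolding wbar_def by simp

lemma wplus_nth: "w \<noteq> [] \<Longrightarrow> t < length w \<Longrightarrow>
   wplus w ! t = (if t = length w - 1 then w!t + 1 else w!t)"
  unfolding wplus_def by (auto simp: nth_append nth_butlast last_conv_nth)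
lemma wminus_nth: "w \<noteq> [] \<Longrightarrow> t < length w \<Longrightarrow>
   wminus w ! t = (if t = length w - 1 then w!t - 1 else w!t)"
  unfolding wminus_def by (auto simp: nth_append nth_butlast last_conv_nth)

lemma pref_len[simp]: "length (pref a j) = j" unfolding pref_def by simp
lemma pref_nth[simp]: "t < j \<Longrightarrow> pref a j ! t = a t" unfolding pref_def by simp

definition cR :: "nat \<Rightarrow> nat list \<Rightarrow> nat \<Rightarrow> nat" where
  "cR M b = wapp (wplus b) (per (wbar M b))"

lemma cR_apply: "b \<noteq> [] \<Longrightarrow> cR M b t = (if t < length b - 1 then b!t else if t = length b - 1 then b!t + 1
    else M - b!((t - length b) mod length b))"
  unfolding cR_def wapp_apply by (auto simp: wplus_nth per_apply wbar_nth)

definition Qs :: "nat \<Rightarrow> (nat \<Rightarrow> nat) \<Rightarrow> bool" where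
  "Qs M a \<longleftrightarrow> a \<in> seqs M \<and> (\<forall>n. lex_le (shift n a) a)"

lemma fund_b0:
  assumes "b \<in> fundamental M" "2 \<le> length b"
  shows "M - b!0 < b!0" "b!(length b - 1) < b!0"
proof -
  have "(\<exists>k<length b - (length b - 1). (\<forall>t<k. b!(length b - 1+t) = b!t) \<and> b!(length b - 1+k) < b!k)
       \<and> (\<forall>K<length b - (length b - 1). (\<forall>t<K. M - b!t = b!(length b - 1+t)) \<longrightarrow> M - b!K \<le> b!(length b - 1+K))"
    using fund_elim[OF assms, of "length b - 1"] assms by auto
  moreover have "length b - (length b - 1) = 1" using assms(2) by auto
  ultimately have "b!(length b - 1) < b!0" "M - b!0 \<le> b!(length b - 1)" by auto
  then show "M - b!0 < b!0" "b!(length b - 1) < b!0" by auto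
qed

lemma fund_per_seqs: "b \<in> fundamental M \<Longrightarrow> per b \<in> seqs M"
proof -
  assume b: "b \<in> fundamental M"
  have "\<And>i. i mod length b < length b" using fund_len[OF b] mod_less_divisor by (metis One_nat_def Suc_le_lessD)
  then show ?thesis unfolding seqs_def per_apply using fund_set[OF b] by auto
qed

lemma fund_per_lower:
  assumes b: "b \<in> fundamental M"
  shows "\<forall>n. (\<forall>t<K. M - per b t = per b (t+n)) \<longrightarrow> M - per b K \<le> per b (K+n)"
proof (induction K rule: less_induct)
  case (less K)
  let ?m = "length b"
  have m1: "?m \<ge> 1" using fund_len[OF b] .
  have dig: "\<And>t. per b t \<le> M" using fund_per_seqs[OF b] seqsD by blast
  show ?case
  proof (intro allI impI)
    fix n assume H: "\<forall>t<K. M - per b t = per b (t+n)"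
    define i where "i = n mod ?m"
    have pi: "\<And>t. per b (t+n) = per b (t+i)" unfolding i_def by (rule per_mod)
    show "M - per b K \<le> per b (K+n)"
    proof (cases "?m = 1")
      case True
      then have "\<And>t. per b t = b!0" unfolding per_apply by simp
      then show ?thesis using fund_single[OF b True] by simp
    next
      case False
      then have m2: "?m \<ge> 2" using m1 by auto
      have s: "M - b!0 < b!0" using fund_b0[OF b m2] by simp
      have pb0: "per b 0 = b!0" using m1 by (intro per_nth) auto
      show ?thesis
      proof (cases "i = 0")
        case True
        then have pn: "\<And>t. per b (t+n) = per b t" using pi by simp
        show ?thesis
        proof (cases "K = 0")
          case True then show ?thesis using pn[of 0] s pb0 by simp
        next
          case False
          then have "M - per b 0 = per b (0+n)" using H by auto
          then show ?thesis using pn[of 0] s pb0 by simp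
        qed
      next
        case False
        then have i: "1 \<le> i" "i < ?m" unfolding i_def using m1 by (auto intro!: mod_less_divisor)
        note FE = fund_elim[OF b m2 i]
        show ?thesis
        proof (cases "K < ?m - i")
          case True
          have "\<forall>t<K. M - b!t = b!(i+t)"
          proof (intro allI impI)
            fix t assume "t < K"
            then show "M - b!t = b!(i+t)" using H pi[of t] True per_nth[of t b] per_nth[of "t+i" b]
              by (auto simp: add.commute)
          qed
          then have "M - b!K \<le> b!(i+K)" using FE True by blast
          then show ?thesis using pi[of K] True per_nth[of K b] per_nth[of "K+i" b] by (auto simp: add.commute)
        next
          case False
          define K' where "K' = K - (?m - i)"
          have KK: "K = K' + (?m - i)" "K' < K" using False i unfolding K'_def by auto
          have H2: "\<forall>t<K'. M - per b t = per b (t + (?m - i))"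
          proof (intro allI impI)
            fix t assume "t < K'"
            then have "M - per b (t + (?m - i)) = per b (t + (?m - i) + n)" using H KK by auto
            also have "\<dots> = per b (t + (?m - i) + i)" using pi by simp
            also have "\<dots> = per b t" using i per_len[of b t] by (simp add: add.assoc)
            finally show "M - per b t = per b (t + (?m - i))" using dig[of t] dig[of "t + (?m - i)"] by linarith
          qed
          have "M - per b K' \<le> per b (K' + (?m - i))" using less.IH[OF KK(2)] H2 by blast
          moreover have "per b (K' + (?m - i)) = per b K" using KK(1) by simp
          ultimately have "M - per b K \<le> per b K'" using dig[of K] dig[of K'] by linarith
          moreover have "per b (K + n) = per b K'"
            using pi[of K] KK(1) i per_len[of b K'] by (simp add: add.assoc)
          ultimately show ?thesis by simp
        qed
      qed
    qed
  qed
qed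

lemma fund_per_upper:
  assumes b: "b \<in> fundamental M"
  shows "lex_le (shift n (per b)) (per b)"
proof -
  let ?m = "length b"
  have m1: "?m \<ge> 1" using fund_len[OF b] .
  define i where "i = n mod ?m"
  have pi: "\<And>t. per b (t+n) = per b (t+i)" unfolding i_def by (rule per_mod)
  show ?thesis
  proof (cases "i = 0")
    case True
    then have "shift n (per b) = per b" using pi by (auto simp: shift_def)
    then show ?thesis by simp
  next
    case False
    then have i: "1 \<le> i" "i < ?m" unfolding i_def using m1 by (auto intro!: mod_less_divisor)
    then have m2: "?m \<ge> 2" by auto
    obtain k where k: "k<?m - i" "\<forall>t<k. b!(i+t) = b!t" "b!(i+k) < b!k" using fund_elim[OF b m2 i] by blast
    have "lex_less (shift n (per b)) (per b)"
    proof (rule lex_lessI[of k])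
      fix t assume "t < k"
      then show "shift n (per b) t = per b t" using pi[of t] k per_nth[of t b] per_nth[of "t+i" b]
        by (auto simp: add.commute)
    next
      show "shift n (per b) k < per b k" using pi[of k] k per_nth[of k b] per_nth[of "k+i" b]
        by (auto simp: add.commute)
    qed
    then show ?thesis by (rule lex_less_imp_le)
  qed
qed

lemma fund_per_V: "b \<in> fundamental M \<Longrightarrow> per b \<in> V M"
  unfolding V_def using fund_per_seqs fund_per_upper fund_per_lower
  by (auto simp: lex_le_iff)

lemma fund_per_Qs: "b \<in> fundamental M \<Longrightarrow> Qs M (per b)"
  unfolding Qs_def using fund_per_seqs fund_per_upper by auto

lemma fund_b0_pos: assumes b: "b \<in> fundamental M" shows "b!0 \<ge> 1"
proof (cases "length b = 1")
  case True then show ?thesis using fund_single[OF b] by auto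
next
  case False then have "2 \<le> length b" using fund_len[OF b] by auto
  then show ?thesis using fund_b0[OF b] by auto
qed

lemma fund_last_lt: assumes b: "b \<in> fundamental M" shows "b!(length b - 1) < M"
proof (cases "length b = 1")
  case True then show ?thesis using fund_single[OF b] by auto
next
  case False then have "2 \<le> length b" using fund_len[OF b] by auto
  then show ?thesis using fund_b0[OF b] fund_set[OF b, of 0] by fastforce
qed


definition noz :: "(nat \<Rightarrow> nat) \<Rightarrow> bool" where
  "noz a \<longleftrightarrow> (\<forall>n. \<exists>i\<ge>n. a i \<noteq> 0)"

lemma aux_mod: "(m::nat) \<ge> 1 \<Longrightarrow> (m * Suc n + (m - 1) - m) mod m = m - 1"
proof -
  assume "m \<ge> 1"
  then obtain k where m: "m = Suc k" by (cases m) auto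
  have "m * Suc n + (m - 1) - m = k + m * n" unfolding m by simp
  also have "(k + m * n) mod m = k mod m" by (metis mod_mult_self1 mult.commute)
  finally show ?thesis unfolding m by simp
qed

lemma fund_ne: "b \<in> fundamental M \<Longrightarrow> b \<noteq> []" using fund_len by fastforce

lemma cR_seqs: assumes b: "b \<in> fundamental M" shows "cR M b \<in> seqs M"
  unfolding seqs_def using fund_set[OF b] fund_last_lt[OF b] fund_len[OF b]
  by (auto simp: cR_apply[OF fund_ne[OF b]])

lemma per_less_cR: assumes b: "b \<in> fundamental M" shows "lex_less (per b) (cR M b)"
proof (rule lex_lessI[of "length b - 1"])
  fix i assume "i < length b - 1"
  then show "per b i = cR M b i" by (simp add: cR_apply[OF fund_ne[OF b]] per_nth)
next
  show "per b (length b - 1) < cR M b (length b - 1)"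
    using fund_len[OF b] by (simp add: cR_apply[OF fund_ne[OF b]] per_nth)
qed

lemma shift_cR_tail: assumes b: "b \<in> fundamental M" "length b \<le> n"
  shows "shift n (cR M b) = sbar M (shift (n - length b) (per b))"
proof (rule ext)
  fix t
  have "\<not> t + n < length b" "t + n \<noteq> length b - 1" using b fund_len[OF b(1)] by auto
  then show "shift n (cR M b) t = sbar M (shift (n - length b) (per b)) t"
    using b by (auto simp: cR_apply[OF fund_ne[OF b(1)]] per_apply)
qed

lemma lex_less_shift_back:
  assumes "\<And>i. i < L \<Longrightarrow> x i = y i" "lex_less (shift L x) (shift L y)"
  shows "lex_less x y"
proof -
  obtain n where n: "\<forall>i<n. x (i+L) = y (i+L)" "x (n+L) < y (n+L)"
    using assms(2) unfolding lex_less_def by auto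
  show ?thesis
  proof (rule lex_lessI[of "n+L"])
    fix i assume "i < n + L"
    then show "x i = y i" using assms(1) n(1)
      by (metis add.commute add_diff_inverse_nat less_diff_conv2 linorder_not_less)
  qed (use n in auto)
qed

lemma cR_upper: assumes b: "b \<in> fundamental M" shows "lex_le (shift n (cR M b)) (cR M b)"
proof -
  let ?m = "length b" and ?c = "cR M b"
  have ne: "b \<noteq> []" using fund_ne[OF b] .
  note ca = cR_apply[OF ne, of M]
  have V: "per b \<in> V M" using fund_per_V[OF b] .
  have Vl: "\<And>k. lex_le (sbar M (per b)) (shift k (per b))" using V unfolding V_def by auto
  show ?thesis
  proof (cases "n = 0")
    case True then show ?thesis by simp
  next
    case n0: False
    show ?thesis
    proof (cases "?m \<le> n")
      case True
      have "lex_le (sbar M (shift (n - ?m) (per b))) (sbar M (sbar M (per b)))"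
        by (rule lex_le_sbar[OF sbar_seqs shift_seqs[OF fund_per_seqs[OF b]] Vl])
      then have "lex_le (shift n ?c) (per b)"
        using shift_cR_tail[OF b True] sbar_sbar[OF fund_per_seqs[OF b]] by simp
      then show ?thesis using per_less_cR[OF b] lex_le_less_trans lex_less_imp_le by blast
    next
      case False
      then have i: "1 \<le> n" "n < ?m" using n0 by auto
      then have m2: "2 \<le> ?m" by auto
      obtain k where k: "k<?m - n" "\<forall>t<k. b!(n+t) = b!t" "b!(n+k) < b!k" using fund_elim[OF b m2 i] by blast
      have agree: "\<And>t. t < k \<Longrightarrow> shift n ?c t = ?c t"
        using k i by (auto simp: ca add.commute)
      show ?thesis
      proof (cases "n + k < ?m - 1 \<or> b!(?m - 1) + 1 < b!k")
        case True
        have "lex_less (shift n ?c) ?c"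
        proof (rule lex_lessI[of k])
          have "k < ?m - 1" using k i by linarith
          then have ck: "?c k = b!k" by (simp add: ca)
          have sk: "shift n ?c k = (if n + k < ?m - 1 then b!(n+k) else b!(?m - 1)+1)"
            using k i by (auto simp: ca add.commute)
          show "shift n ?c k < ?c k" using True k unfolding ck sk by auto
        qed (rule agree)
        then show ?thesis by (rule lex_less_imp_le)
      next
        case False
        then have nk1: "n + k = ?m - 1" using k by auto
        then have "b!(?m - 1) < b!k" using k(3) by simp
        then have nk: "n + k = ?m - 1" "b!(?m - 1) + 1 = b!k" using nk1 False by auto
        have agree2: "\<And>t. t < ?m - n \<Longrightarrow> shift n ?c t = ?c t"
        proof -
          fix t assume t: "t < ?m - n"
          show "shift n ?c t = ?c t"
          proof (cases "t < k")
            case True then show ?thesis by (rule agree)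
          next
            case False then have "t = k" using t nk by auto
            then show ?thesis using nk i by (auto simp: ca add.commute)
          qed
        qed
        have "lex_less (shift (?m - n) (shift n ?c)) (shift (?m - n) ?c)"
        proof -
          have e: "shift (?m - n) (shift n ?c) = sbar M (per b)"
            using shift_cR_tail[OF b, of ?m] i by simp
          have "lex_less (shift (?m - n) (per b)) (shift (?m - n) ?c)"
          proof (rule lex_lessI[of "n - 1"])
            fix s assume "s < n - 1"
            then show "shift (?m - n) (per b) s = shift (?m - n) ?c s"
              using i by (auto simp: ca per_nth)
          next
            show "shift (?m - n) (per b) (n - 1) < shift (?m - n) ?c (n - 1)"
              using i by (auto simp: ca per_nth)
          qed
          then show ?thesis using e Vl lex_le_less_trans by metis
        qed
        then have "lex_less (shift n ?c) ?c" using lex_less_shift_back[of "?m - n" "shift n ?c" ?c] agree2 by blast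
        then show ?thesis by (rule lex_less_imp_le)
      qed
    qed
  qed
qed

lemma cR_Qs: "b \<in> fundamental M \<Longrightarrow> Qs M (cR M b)"
  unfolding Qs_def using cR_seqs cR_upper by blast

lemma per_noz: assumes b: "b \<in> fundamental M" shows "noz (per b)"
  unfolding noz_def
proof
  fix n
  have "per b (length b * n) = b!0"
  proof -
    have "per b 0 = b!0" using fund_len[OF b] by (intro per_nth) auto
    then show ?thesis using per_len_mult[of b 0 n] by simp
  qed
  moreover have "length b * n \<ge> n" using fund_len[OF b] by simp
  ultimately show "\<exists>i\<ge>n. per b i \<noteq> 0" using fund_b0_pos[OF b] by (intro exI[of _ "length b * n"]) auto
qed

lemma cR_noz: assumes b: "b \<in> fundamental M" shows "noz (cR M b)"
  unfolding noz_def
proof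
  fix n
  let ?i = "length b * Suc n + (length b - 1)"
  have m1: "length b \<ge> 1" using fund_len[OF b] .
  have "length b * Suc n \<ge> Suc n" using mult_le_mono1[of 1 "length b" "Suc n"] m1 by simp
  then have "?i \<ge> n" by linarith
  moreover have "cR M b ?i = M - b!(length b - 1)"
  proof -
    have "\<not> ?i < length b" "?i \<noteq> length b - 1" using m1 by auto
    moreover have "(?i - length b) mod length b = length b - 1"
      using aux_mod[OF m1] .
    ultimately show ?thesis by (simp add: cR_apply[OF fund_ne[OF b]])
  qed
  ultimately show "\<exists>i\<ge>n. cR M b i \<noteq> 0" using fund_last_lt[OF b] by (intro exI[of _ ?i]) auto
qed

lemma prefix_cR:
  assumes b: "b \<in> fundamental M" and a: "Qs M a" and l: "lex_less (per b) a" and u: "lex_le a (cR M b)"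
  shows "(\<forall>t<length b - 1. a t = b!t) \<and> a (length b - 1) = b!(length b - 1) + 1"
proof -
  let ?m = "length b"
  have m1: "?m \<ge> 1" using fund_len[OF b] .
  note ca = cR_apply[OF fund_ne[OF b], of M]
  obtain p where p: "\<forall>i<p. per b i = a i" "per b p < a p" using l unfolding lex_less_def by blast
  have "p < ?m"
  proof (rule ccontr)
    assume "\<not> p < ?m"
    define s where "s = ?m * (p div ?m)"
    define r where "r = p mod ?m"
    have "?m div ?m \<le> p div ?m" using \<open>\<not> p < ?m\<close> by (intro div_le_mono) auto
    moreover have "?m div ?m = 1" using m1 by (intro div_self) auto
    ultimately have "p div ?m \<ge> 1" by simp
    then have ps: "p = r + s" "s \<ge> 1" unfolding s_def r_def using m1
      by (auto simp: add.commute)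
    have rp: "r < p" using ps by auto
    have "lex_less a (shift s a)"
    proof (rule lex_lessI[of r])
      fix t assume t: "t < r"
      have "a t = per b t" using p(1) t rp by auto
      moreover have "a (t + s) = per b (t + s)" using p(1) t ps by auto
      moreover have "per b (t + s) = per b t" unfolding s_def using per_len_mult by simp
      ultimately show "a t = shift s a t" by simp
    next
      have "a r = per b r" using p(1) rp by auto
      moreover have "per b p = per b r" using ps unfolding s_def using per_len_mult
        by (metis s_def)
      ultimately show "a r < shift s a r" using p(2) ps by simp
    qed
    then show False using a unfolding Qs_def using lex_le_iff_not_less by blast
  qed
  have "\<not> p < ?m - 1"
  proof
    assume pl: "p < ?m - 1"
    have "lex_less (cR M b) a"
    proof (rule lex_lessI[of p])
      fix i assume "i < p"
      then show "cR M b i = a i" using p(1) pl by (auto simp: ca per_nth)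
    next
      show "cR M b p < a p" using p(2) pl by (auto simp: ca per_nth)
    qed
    then show False using u lex_le_iff_not_less by blast
  qed
  then have pm: "p = ?m - 1" using \<open>p < ?m\<close> by auto
  have ag: "\<forall>t<?m - 1. a t = b!t" using p(1) pm by (auto simp: per_nth)
  have "a (?m - 1) \<le> cR M b (?m - 1)"
    using lex_le_digit[OF u, of "?m - 1"] ag by (auto simp: ca)
  then have "a (?m - 1) \<le> b!(?m - 1) + 1" by (simp add: ca)
  moreover have "b!(?m - 1) < a (?m - 1)" using p(2) pm m1 by (simp add: per_nth)
  ultimately show ?thesis using ag by auto
qed

lemma wminus_wplus: "w \<noteq> [] \<Longrightarrow> wminus (wplus w) = w"
  unfolding wminus_def wplus_def by simp

lemma wplus_wminus: "w \<noteq> [] \<Longrightarrow> last w > 0 \<Longrightarrow> wplus (wminus w) = w"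
  unfolding wminus_def wplus_def by simp

lemma wplus_wbar_wplus: assumes "w \<noteq> []" "last w < M" shows "wplus (wbar M (wplus w)) = wbar M w"
proof -
  have "wbar M (wplus w) = butlast (wbar M w) @ [M - (last w + 1)]"
    unfolding wplus_def wbar_def by (simp add: map_butlast)
  moreover have "wbar M w = butlast (wbar M w) @ [M - last w]"
    using assms unfolding wbar_def by (metis append_butlast_last_id last_map list.map_disc_iff map_butlast)
  ultimately show ?thesis unfolding wplus_def using assms
    by (metis Suc_diff_Suc Suc_eq_plus1 butlast_snoc last_snoc)
qed

lemma dir1:
  assumes a: "Qs M a" and irr: "irreducible_seq M a" and b: "b \<in> fundamental M"
  shows "\<not> (lex_less (per b) a \<and> lex_le a (cR M b))"
proof
  assume h: "lex_less (per b) a \<and> lex_le a (cR M b)"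
  let ?m = "length b"
  have ne: "b \<noteq> []" using fund_ne[OF b] .
  have m1: "?m \<ge> 1" using fund_len[OF b] .
  have pr: "(\<forall>t<?m - 1. a t = b!t) \<and> a (?m - 1) = b!(?m - 1) + 1"
    using prefix_cR[OF b a] h by blast
  have pw: "pref a ?m = wplus b"
  proof (rule nth_equalityI)
    show "length (pref a ?m) = length (wplus b)" using ne by simp
  next
    fix i assume "i < length (pref a ?m)"
    then show "pref a ?m ! i = wplus b ! i" using pr ne
      by (cases "i = ?m - 1") (auto simp: wplus_nth)
  qed
  have pos: "a (?m - 1) > 0" using pr by simp
  have "per (wminus (pref a ?m)) \<in> V M" using pw wminus_wplus[OF ne] fund_per_V[OF b] by simp
  then have "lex_less (wapp (pref a ?m) (per (wplus (wbar M (pref a ?m))))) a"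
    using irr pos m1 unfolding irreducible_seq_def by blast
  moreover have "wplus (wbar M (pref a ?m)) = wbar M b"
    using pw wplus_wbar_wplus[OF ne] fund_last_lt[OF b] ne by (simp add: last_conv_nth)
  ultimately have "lex_less (cR M b) a" using pw unfolding cR_def by simp
  then show False using h lex_le_iff_not_less by blast
qed


definition gseq :: "nat \<Rightarrow> nat \<Rightarrow> nat" where
  "gseq M = (if even M then per [M div 2] else per [M div 2 + 1, M div 2])"

lemma wm_facts:
  assumes "j \<ge> 1"
  shows "length (wminus (pref a j)) = j"
    "\<And>t. t < j - 1 \<Longrightarrow> wminus (pref a j) ! t = a t"
    "wminus (pref a j) ! (j - 1) = a (j - 1) - 1"
proof -
  have ne: "pref a j \<noteq> []" using assms pref_len[of a j] by (metis length_0_conv not_one_le_zero)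
  show "length (wminus (pref a j)) = j" using ne by simp
  show "\<And>t. t < j - 1 \<Longrightarrow> wminus (pref a j) ! t = a t" using ne by (simp add: wminus_nth)
  show "wminus (pref a j) ! (j - 1) = a (j - 1) - 1" using ne assms by (simp add: wminus_nth)
qed

lemma pref_ne: "j \<ge> 1 \<Longrightarrow> pref a j \<noteq> []"
  using pref_len[of a j] by (metis length_0_conv not_one_le_zero)

lemma fund_intro1:
  assumes "length b = 1" "M \<ge> 2" "M - b!0 \<le> b!0" "b!0 < M"
  shows "b \<in> fundamental M"
proof -
  obtain c where b: "b = [c]" using assms(1) by (cases b) auto
  show ?thesis using assms unfolding fundamental_def b by auto
qed

lemma witness:
  assumes a: "Qs M a" and j: "j \<ge> 1" and pos: "a (j - 1) > 0"
    and low: "(j \<ge> 2 \<and> (\<forall>i K. 1 \<le> i \<and> i < j \<and> K < j - i \<longrightarrow>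
          (\<forall>t<K. M - wminus (pref a j)!t = wminus (pref a j)!(i+t)) \<longrightarrow>
             M - wminus (pref a j)!K \<le> wminus (pref a j)!(i+K)))
       \<or> (j = 1 \<and> M \<ge> 2 \<and> M - wminus (pref a j)!0 \<le> wminus (pref a j)!0)"
    and up: "lex_le a (cR M (wminus (pref a j)))"
  shows "\<exists>b\<in>fundamental M. lex_less (per b) a \<and> lex_le a (cR M b)"
proof -
  let ?b = "wminus (pref a j)"
  note bf = wm_facts[OF j, where a=a]
  have aseq: "a \<in> seqs M" and ash: "\<And>n. lex_le (shift n a) a" using a unfolding Qs_def by auto
  have dig: "\<And>t. a t \<le> M" using seqsD[OF aseq] .
  have bdig: "\<forall>t<length ?b. ?b!t \<le> M"
  proof (intro allI impI)
    fix t assume "t < length ?b"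
    then show "?b!t \<le> M" using bf dig[of t] by (cases "t = j - 1") auto
  qed
  have lt: "lex_less (per ?b) a"
  proof (rule lex_lessI[of "j - 1"])
    fix i assume "i < j - 1"
    then show "per ?b i = a i" using bf by (simp add: per_nth)
  next
    show "per ?b (j - 1) < a (j - 1)" using bf pos j by (simp add: per_nth)
  qed
  have fund: "?b \<in> fundamental M"
  proof (cases "j = 1")
    case True
    then have "M \<ge> 2" "M - ?b!0 \<le> ?b!0" using low by auto
    moreover have "?b!0 < M" using bf True pos dig[of 0] by simp
    ultimately show ?thesis using fund_intro1 bf True by auto
  next
    case False
    then have j2: "j \<ge> 2" using j by auto
    have L: "\<forall>i K. 1 \<le> i \<and> i < j \<and> K < j - i \<longrightarrow>
          (\<forall>t<K. M - ?b!t = ?b!(i+t)) \<longrightarrow> M - ?b!K \<le> ?b!(i+K)" using low False by auto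
    show ?thesis
    proof (rule fund_intro[OF bdig])
      show "2 \<le> length ?b" using bf j2 by simp
    next
      fix i assume i: "1 \<le> i" "i < length ?b"
      then have i': "1 \<le> i" "i < j" using bf by auto
      have "\<exists>k<j - i. (\<forall>t<k. ?b!(i+t) = ?b!t) \<and> ?b!(i+k) < ?b!k"
      proof (cases "\<exists>k<j - i - 1. (\<forall>t<k. a (t+i) = a t) \<and> a (k+i) < a k")
        case True
        then obtain k where k: "k < j - i - 1" "\<forall>t<k. a (t+i) = a t" "a (k+i) < a k" by blast
        show ?thesis
        proof (intro exI[of _ k] conjI allI impI)
          show "k < j - i" using k by simp
          show "?b!(i+k) < ?b!k" using k bf i' by (simp add: add.commute)
        next
          fix t assume t: "t < k"
          then have "i + t < j - 1" "t < j - 1" using k by auto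
          then have "?b!(i+t) = a (t+i)" "?b!t = a t" using bf by (auto simp: add.commute)
          then show "?b!(i+t) = ?b!t" using k t by simp
        qed
      next
        case False
        have ag: "\<forall>t<j - i - 1. a (t+i) = a t"
        proof -
          have "shift i a = a \<or> lex_less (shift i a) a" using ash[of i] unfolding lex_le_def by auto
          then show ?thesis
          proof
            assume "shift i a = a" then show ?thesis by (metis shift_apply)
          next
            assume "lex_less (shift i a) a"
            then obtain n where n: "\<forall>t<n. a (t+i) = a t" "a (n+i) < a n" unfolding lex_less_def by auto
            then have "\<not> n < j - i - 1" using False by blast
            then show ?thesis using n by auto
          qed
        qed
        have le: "a (j - i - 1 + i) \<le> a (j - i - 1)"
          using lex_le_digit[OF ash[of i], of "j - i - 1"] ag by simp
        have e: "j - i - 1 + i = j - 1" using i' by simp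
        show ?thesis
        proof (intro exI[of _ "j - i - 1"] conjI allI impI)
          show "j - i - 1 < j - i" using i' by simp
        next
          fix t assume t: "t < j - i - 1"
          then have "i + t < j - 1" "t < j - 1" by auto
          then have "?b!(i+t) = a (t+i)" "?b!t = a t" using bf by (auto simp: add.commute)
          then show "?b!(i+t) = ?b!t" using ag t by simp
        next
          have "?b!(i + (j - i - 1)) = a (j - 1) - 1" using bf i' by (simp add: add.commute e)
          moreover have "?b!(j - i - 1) = a (j - i - 1)" using bf i' by simp
          moreover have "a (j - 1) \<le> a (j - i - 1)" using le e by simp
          ultimately show "?b!(i + (j - i - 1)) < ?b!(j - i - 1)" using pos by linarith
        qed
      qed
      moreover have "\<forall>K<length ?b - i. (\<forall>t<K. M - ?b!t = ?b!(i+t)) \<longrightarrow> M - ?b!K \<le> ?b!(i+K)"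
      proof (intro allI impI)
        fix K assume K: "K < length ?b - i" "\<forall>t<K. M - ?b!t = ?b!(i+t)"
        then have "K < j - i" using bf(1) by simp
        then show "M - ?b!K \<le> ?b!(i+K)" using L i' K(2) by blast
      qed
      ultimately show "(\<exists>k<length ?b - i. (\<forall>t<k. ?b!(i+t) = ?b!t) \<and> ?b!(i+k) < ?b!k)
       \<and> (\<forall>K<length ?b - i. (\<forall>t<K. M - ?b!t = ?b!(i+t)) \<longrightarrow> M - ?b!K \<le> ?b!(i+K))"
        using bf by simp
    qed
  qed
  show ?thesis using fund lt up by blast
qed

lemma cR_wminus:
  assumes j: "j \<ge> 1" and pos: "a (j - 1) > 0" and dig: "a (j - 1) \<le> M"
  shows "cR M (wminus (pref a j)) = wapp (pref a j) (per (wplus (wbar M (pref a j))))"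
proof -
  have ne: "pref a j \<noteq> []" using j by (rule pref_ne)
  have l: "last (pref a j) = a (j - 1)" using ne j by (simp add: last_conv_nth)
  have wp: "wplus (wminus (pref a j)) = pref a j" using wplus_wminus[OF ne] l pos by simp
  have "wplus (wbar M (pref a j)) = wbar M (wminus (pref a j))"
  proof -
    have ne2: "wminus (pref a j) \<noteq> []" using ne unfolding wminus_def by simp
    have "last (wminus (pref a j)) < M" using l pos dig unfolding wminus_def by simp
    then show ?thesis using wplus_wbar_wplus[OF ne2] wp by simp
  qed
  then show ?thesis unfolding cR_def wp by simp
qed


lemma gseq_even: "even M \<Longrightarrow> gseq M t = M div 2"
  unfolding gseq_def per_apply by simp

lemma per2: "per [x, y] t = (if even t then x else y)"
proof (cases "even t")
  case True then have "t mod Suc (Suc 0) = 0" by presburger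
  then show ?thesis using True by (simp add: per_apply)
next
  case False then have "t mod Suc (Suc 0) = 1" by presburger
  then show ?thesis using False by (simp add: per_apply)
qed

lemma gseq_odd: "odd M \<Longrightarrow> gseq M t = (if even t then M div 2 + 1 else M div 2)"
  unfolding gseq_def by (simp add: per2)

lemma gseq_seqs: "M \<ge> 1 \<Longrightarrow> gseq M \<in> seqs M"
  unfolding seqs_def
proof (cases "even M")
  case True then show "gseq M \<in> {c. \<forall>i. c i \<le> M}" by (simp add: gseq_even)
next
  case False then show "M \<ge> 1 \<Longrightarrow> gseq M \<in> {c. \<forall>i. c i \<le> M}" by (auto simp: gseq_odd)
qed

lemma gseq_sbar_le: "M \<ge> 1 \<Longrightarrow> lex_le (sbar M (gseq M)) (gseq M)"
proof (cases "even M")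
  case True
  then have "sbar M (gseq M) = gseq M" by (intro ext) (simp add: gseq_even, presburger)
  then show ?thesis by simp
next
  case False
  assume "M \<ge> 1"
  have "lex_less (sbar M (gseq M)) (gseq M)"
    by (rule lex_lessI[of 0]) (use False in \<open>auto simp: gseq_odd\<close>)
  then show ?thesis by (rule lex_less_imp_le)
qed

lemma sbar_le_self:
  assumes "M \<ge> 1" "a \<in> seqs M" "lex_le (gseq M) a"
  shows "lex_le (sbar M a) a"
proof -
  have "lex_le (sbar M a) (sbar M (gseq M))" using lex_le_sbar[OF gseq_seqs[OF assms(1)] assms(2,3)] .
  then show ?thesis using gseq_sbar_le[OF assms(1)] assms(3) lex_le_trans by blast
qed

lemma a0_pos: assumes "M \<ge> 1" "lex_le (gseq M) a" shows "a 0 \<ge> 1"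
proof -
  have "gseq M 0 \<le> a 0" using lex_le_digit[OF assms(2), of 0] by simp
  moreover have "gseq M 0 \<ge> 1" using assms(1)
    by (cases "even M") (auto simp: gseq_even gseq_odd)
  ultimately show ?thesis by simp
qed

lemma NA:
  assumes a: "Qs M a" and h: "lex_le (sbar M a) (shift i a)" and f: "lex_less (shift n a) (sbar M a)"
    and i: "i < n"
  shows "\<not> (\<forall>t<n-i. M - a t = a (t+i))"
proof
  assume ag: "\<forall>t<n-i. M - a t = a (t+i)"
  let ?L = "n - i"
  have "lex_le (shift ?L (sbar M a)) (shift ?L (shift i a))"
    by (rule lex_le_shift[OF h]) (use ag in auto)
  moreover have "shift ?L (shift i a) = shift n a" using i by simp
  moreover have "shift ?L (sbar M a) = sbar M (shift ?L a)" by (rule shift_sbar)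
  moreover have "lex_le (sbar M a) (sbar M (shift ?L a))"
    using a unfolding Qs_def by (intro lex_le_sbar) (auto intro: shift_seqs)
  ultimately have "lex_le (sbar M a) (shift n a)" using lex_le_trans by metis
  then show False using f lex_le_iff_not_less by blast
qed

lemma g_case:
  assumes M: "M \<ge> 1" and a: "Qs M a" and g: "lex_le (gseq M) a" and s: "2 * a 0 \<le> M + 1"
  shows "lex_le (sbar M a) (shift 1 a)"
proof -
  have aseq: "a \<in> seqs M" and ash: "\<And>n. lex_le (shift n a) a" using a unfolding Qs_def by auto
  have g0: "gseq M 0 \<le> a 0" using lex_le_digit[OF g, of 0] by simp
  show ?thesis
  proof (cases "even M")
    case True
    then have a0: "a 0 = M div 2" using g0 s by (auto simp: gseq_even)
    have allk: "\<forall>p. a p = M div 2"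
    proof (rule ccontr)
      assume "\<not> (\<forall>p. a p = M div 2)"
      then obtain p0 where "a p0 \<noteq> M div 2" by blast
      define p where "p = (LEAST p. a p \<noteq> M div 2)"
      have p: "a p \<noteq> M div 2" unfolding p_def by (rule LeastI[of _ p0]) fact
      have bef: "\<forall>t<p. a t = M div 2" unfolding p_def using not_less_Least by blast
      have "gseq M p \<le> a p" using lex_le_digit[OF g, of p] bef True by (simp add: gseq_even)
      then have gt: "a p > M div 2" using p True by (simp add: gseq_even)
      have "lex_less a (shift p a)" by (rule lex_lessI[of 0]) (use gt a0 in auto)
      then show False using ash[of p] lex_le_iff_not_less by blast
    qed
    then have "sbar M a = shift 1 a" using True by (auto simp: sbar_def shift_def)
    then show ?thesis by simp
  next
    case False
    then have a0: "a 0 = M div 2 + 1" using g0 s by (auto simp: gseq_odd)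
    show ?thesis
    proof (cases "a 1 \<ge> M div 2 + 1")
      case True
      have "lex_less (sbar M a) (shift 1 a)"
        by (rule lex_lessI[of 0]) (use True a0 False in \<open>auto\<close>)
      then show ?thesis by (rule lex_less_imp_le)
    next
      case c1: False
      have "gseq M 1 \<le> a 1" using lex_le_digit[OF g, of 1] a0 False by (simp add: gseq_odd)
      then have a1: "a 1 = M div 2" using c1 False by (simp add: gseq_odd)
      have eq: "\<forall>p. a p = gseq M p"
      proof (rule ccontr)
        assume "\<not> (\<forall>p. a p = gseq M p)"
        then obtain p0 where "a p0 \<noteq> gseq M p0" by blast
        define p where "p = (LEAST p. a p \<noteq> gseq M p)"
        have p: "a p \<noteq> gseq M p" unfolding p_def by (rule LeastI[of _ p0]) fact
        have bef: "\<forall>t<p. a t = gseq M t" unfolding p_def using not_less_Least by blast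
        have "gseq M p \<le> a p" using lex_le_digit[OF g, of p] bef by simp
        then have gt: "a p > gseq M p" using p by simp
        have p2: "p \<ge> 2" using p a0 a1 False by (cases p; cases "p - 1") (auto simp: gseq_odd)
        show False
        proof (cases "even p")
          case True
          have "lex_less a (shift p a)" by (rule lex_lessI[of 0]) (use gt a0 True False in \<open>auto simp: gseq_odd\<close>)
          then show False using ash[of p] lex_le_iff_not_less by blast
        next
          case podd: False
          have "a (p - 1) = gseq M (p - 1)" using bef p2 by simp
          then have ap1: "a (p - 1) = M div 2 + 1" using podd p2 False by (simp add: gseq_odd)
          have "lex_less a (shift (p - 1) a)"
          proof (rule lex_lessI[of 1])
            fix i assume "i < (1::nat)" then show "a i = shift (p - 1) a i" using ap1 a0 by simp
          next
            show "a 1 < shift (p - 1) a 1" using gt podd False a1 p2 by (simp add: gseq_odd)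
          qed
          then show False using ash[of "p - 1"] lex_le_iff_not_less by blast
        qed
      qed
      have "sbar M a = shift 1 a"
      proof (rule ext)
        fix t show "sbar M a t = shift 1 a t" using eq False by (auto simp: gseq_odd) presburger+
      qed
      then show ?thesis by simp
    qed
  qed
qed


lemma dir2_notV:
  assumes M: "M \<ge> 1" and a: "Qs M a" and g: "lex_le (gseq M) a" and nV: "a \<notin> V M"
  shows "\<exists>b\<in>fundamental M. lex_less (per b) a \<and> lex_le a (cR M b)"
proof -
  have aseq: "a \<in> seqs M" and ash: "\<And>n. lex_le (shift n a) a" using a unfolding Qs_def by auto
  have dig: "\<And>t. a t \<le> M" using seqsD[OF aseq] .
  have "\<exists>n. \<not> lex_le (sbar M a) (shift n a)" using nV aseq ash unfolding V_def by auto
  then obtain n0 where n0: "\<not> lex_le (sbar M a) (shift n0 a)" by blast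
  define n where "n = (LEAST n. \<not> lex_le (sbar M a) (shift n a))"
  have nf: "\<not> lex_le (sbar M a) (shift n a)" unfolding n_def by (rule LeastI[of _ n0]) fact
  have f: "lex_less (shift n a) (sbar M a)" using nf lex_le_iff_not_less by blast
  have bef: "\<And>l. l < n \<Longrightarrow> lex_le (sbar M a) (shift l a)" unfolding n_def using not_less_Least by blast
  have sl: "lex_le (sbar M a) a" using sbar_le_self[OF M aseq g] .
  have n1: "n \<ge> 1" using nf sl by (cases n) auto
  have pos: "a (n - 1) > 0"
  proof (rule ccontr)
    assume "\<not> a (n - 1) > 0"
    then have z: "a (n - 1) = 0" by simp
    have h: "lex_le (sbar M a) (shift (n - 1) a)" using bef n1 by simp
    have "M - a 0 \<le> a (n - 1)" using lex_le_digit[OF h, of 0] by simp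
    then have "\<forall>t<n - (n - 1). M - a t = a (t + (n - 1))" using z n1 by auto
    then show False using NA[OF a h f] n1 by simp
  qed
  let ?b = "wminus (pref a n)"
  note bf = wm_facts[OF n1, where a=a]
  have low: "(n \<ge> 2 \<and> (\<forall>i K. 1 \<le> i \<and> i < n \<and> K < n - i \<longrightarrow>
          (\<forall>t<K. M - ?b!t = ?b!(i+t)) \<longrightarrow> M - ?b!K \<le> ?b!(i+K)))
       \<or> (n = 1 \<and> M \<ge> 2 \<and> M - ?b!0 \<le> ?b!0)"
  proof (cases "n = 1")
    case True
    have "\<not> lex_le (sbar M a) (shift 1 a)" using nf True by simp
    then have "2 * a 0 \<ge> M + 2" using g_case[OF M a g] by linarith
    moreover have "?b!0 = a 0 - 1" using bf True by simp
    ultimately show ?thesis using True dig[of 0] by auto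
  next
    case False
    then have n2: "n \<ge> 2" using n1 by auto
    have "\<forall>i K. 1 \<le> i \<and> i < n \<and> K < n - i \<longrightarrow>
          (\<forall>t<K. M - ?b!t = ?b!(i+t)) \<longrightarrow> M - ?b!K \<le> ?b!(i+K)"
    proof (intro allI impI)
      fix i K assume iK: "1 \<le> i \<and> i < n \<and> K < n - i" and H: "\<forall>t<K. M - ?b!t = ?b!(i+t)"
      have hi: "lex_le (sbar M a) (shift i a)" using bef iK by simp
      have H': "\<forall>t<K. M - a t = a (t+i)"
      proof (intro allI impI)
        fix t assume t: "t < K"
        then have "i + t < n - 1" "t < n - 1" using iK by auto
        then have "?b!(i+t) = a (t+i)" "?b!t = a t" using bf by (auto simp: add.commute)
        then show "M - a t = a (t+i)" using H t by metis
      qed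
      have d: "M - a K \<le> a (K + i)" using lex_le_digit[OF hi, of K] H' by simp
      have "K < n - 1" using iK by auto
      then have bK: "?b!K = a K" using bf(2) by simp
      show "M - ?b!K \<le> ?b!(i+K)"
      proof (cases "i + K < n - 1")
        case True
        then show ?thesis using bf bK d by (simp add: add.commute)
      next
        case False
        then have e: "i + K = n - 1" using iK by auto
        have "M - a K \<noteq> a (K + i)"
        proof
          assume "M - a K = a (K + i)"
          moreover have "n - i = Suc K" using e iK by auto
          ultimately have "\<forall>t<n - i. M - a t = a (t+i)" using H' by (auto simp: less_Suc_eq)
          then show False using NA[OF a hi f] iK by blast
        qed
        then have "M - a K < a (n - 1)" using d e by (simp add: add.commute)
        then show ?thesis using bf bK e by simp
      qed
    qed
    then show ?thesis using n2 by blast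
  qed
  have up: "lex_le a (cR M ?b)"
  proof -
    obtain k where k: "\<forall>t<k. a (t+n) = M - a t" "a (k+n) < M - a k"
      using f unfolding lex_less_def by auto
    define k' where "k' = min k (n - 1)"
    have ne: "?b \<noteq> []" using bf n1 by auto
    have cRa: "\<And>t. cR M ?b t = (if t < n - 1 then ?b!t else if t = n - 1 then ?b!t + 1
          else M - ?b!((t - n) mod n))" using cR_apply[OF ne] bf by simp
    have "lex_less a (cR M ?b)"
    proof (rule lex_lessI[of "n + k'"])
      fix t assume t: "t < n + k'"
      show "a t = cR M ?b t"
      proof (cases "t < n")
        case True
        then show ?thesis using bf pos by (cases "t = n - 1") (auto simp: cRa)
      next
        case False
        define s where "s = t - n"
        have s: "s < k" "s < n - 1" "t = s + n" using t False unfolding s_def k'_def by auto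
        have "(t - n) mod n = s" using s unfolding s_def by simp
        moreover have "\<not> t < n - 1" "t \<noteq> n - 1" using s by auto
        ultimately have "cR M ?b t = M - ?b!s" by (simp add: cRa)
        then have "cR M ?b t = M - a s" using s bf by simp
        then show ?thesis using k(1) s by simp
      qed
    next
      show "a (n + k') < cR M ?b (n + k')"
      proof (cases "k < n - 1")
        case True
        then have "k' = k" unfolding k'_def by simp
        moreover have "cR M ?b (n + k) = M - a k"
        proof -
          have "\<not> n + k < n - 1" "n + k \<noteq> n - 1" "(n + k - n) mod n = k" using True by auto
          then have "cR M ?b (n + k) = M - ?b!k" by (simp only: cRa if_False)
          then show ?thesis using True bf by simp
        qed
        ultimately show ?thesis using k(2) by (simp add: add.commute)
      next
        case False
        then have kk: "k' = n - 1" unfolding k'_def by simp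
        have "cR M ?b (n + (n - 1)) = M - (a (n - 1) - 1)"
        proof -
          have "\<not> n + (n - 1) < n - 1" "n + (n - 1) \<noteq> n - 1" "(n + (n - 1) - n) mod n = n - 1" using n1 by auto
          then have "cR M ?b (n + (n - 1)) = M - ?b!(n - 1)" by (simp only: cRa if_False)
          then show ?thesis using bf by simp
        qed
        moreover have "a (n - 1 + n) \<le> M - a (n - 1)"
        proof (cases "k = n - 1")
          case True then show ?thesis using k(2) by simp
        next
          case False
          then have "n - 1 < k" using \<open>\<not> k < n - 1\<close> by simp
          then show ?thesis using k(1) by simp
        qed
        ultimately have "a (n + (n - 1)) < cR M ?b (n + (n - 1))" using pos dig[of "n - 1"] by (simp add: add.commute) linarith
        then show ?thesis using kk by simp
      qed
    qed
    then show ?thesis by (rule lex_less_imp_le)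
  qed
  show ?thesis by (rule witness[OF a n1 pos low up])
qed

lemma dir2_V:
  assumes M: "M \<ge> 1" and a: "Qs M a" and j: "j \<ge> 1" and pos: "a (j - 1) > 0"
    and pV: "per (wminus (pref a j)) \<in> V M"
    and nl: "\<not> lex_less (wapp (pref a j) (per (wplus (wbar M (pref a j))))) a"
  shows "\<exists>b\<in>fundamental M. lex_less (per b) a \<and> lex_le a (cR M b)"
proof -
  have aseq: "a \<in> seqs M" using a unfolding Qs_def by auto
  have dig: "\<And>t. a t \<le> M" using seqsD[OF aseq] .
  let ?b = "wminus (pref a j)"
  note bf = wm_facts[OF j, where a=a]
  have up: "lex_le a (cR M ?b)" using nl cR_wminus[where a=a and j=j and M=M, OF j pos dig[of "j - 1"]] lex_le_iff_not_less by simp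
  have Vl: "\<And>i. lex_le (sbar M (per ?b)) (shift i (per ?b))" using pV unfolding V_def by auto
  have pb: "\<And>t. t < j \<Longrightarrow> per ?b t = ?b!t" using bf by (simp add: per_nth)
  have low: "(j \<ge> 2 \<and> (\<forall>i K. 1 \<le> i \<and> i < j \<and> K < j - i \<longrightarrow>
          (\<forall>t<K. M - ?b!t = ?b!(i+t)) \<longrightarrow> M - ?b!K \<le> ?b!(i+K)))
       \<or> (j = 1 \<and> M \<ge> 2 \<and> M - ?b!0 \<le> ?b!0)"
  proof (cases "j = 1")
    case True
    have d0: "M - ?b!0 \<le> ?b!0" using lex_le_digit[OF Vl[of 0], of 0] pb[of 0] j by simp
    have "M \<ge> 2"
    proof (rule ccontr)
      assume "\<not> M \<ge> 2"
      then have "M = 1" using M by simp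
      moreover have "?b!0 = a 0 - 1" using bf True by simp
      ultimately show False using d0 dig[of 0] pos True by simp
    qed
    then show ?thesis using True d0 by simp
  next
    case False
    have "\<forall>i K. 1 \<le> i \<and> i < j \<and> K < j - i \<longrightarrow>
          (\<forall>t<K. M - ?b!t = ?b!(i+t)) \<longrightarrow> M - ?b!K \<le> ?b!(i+K)"
    proof (intro allI impI)
      fix i K assume iK: "1 \<le> i \<and> i < j \<and> K < j - i" and H: "\<forall>t<K. M - ?b!t = ?b!(i+t)"
      have "M - per ?b K \<le> per ?b (K + i)"
      proof (rule lex_le_digit[OF Vl[of i], of K, simplified])
        fix t assume "t < K"
        then have "t < j" "t + i < j" using iK by auto
        then have "per ?b t = ?b!t" "per ?b (t + i) = ?b!(i+t)" using pb by (auto simp: add.commute)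
        then show "M - per ?b t = per ?b (t + i)" using H \<open>t < K\<close> by simp
      qed
      moreover have "K < j" "K + i < j" using iK by auto
      ultimately show "M - ?b!K \<le> ?b!(i+K)" using pb[of K] pb[of "K+i"] by (simp add: add.commute)
    qed
    then show ?thesis using False j by auto
  qed
  show ?thesis by (rule witness[OF a j pos low up])
qed

theorem core:
  assumes M: "M \<ge> 1" and a: "Qs M a" and g: "lex_le (gseq M) a"
  shows "irreducible_seq M a \<longleftrightarrow> (\<forall>b\<in>fundamental M. \<not> (lex_less (per b) a \<and> lex_le a (cR M b)))"
proof
  assume "irreducible_seq M a"
  then show "\<forall>b\<in>fundamental M. \<not> (lex_less (per b) a \<and> lex_le a (cR M b))" using dir1[OF a] by blast
next
  assume R: "\<forall>b\<in>fundamental M. \<not> (lex_less (per b) a \<and> lex_le a (cR M b))"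
  show "irreducible_seq M a"
  proof (rule ccontr)
    assume ni: "\<not> irreducible_seq M a"
    show False
    proof (cases "a \<in> V M")
      case False
      then show False using dir2_notV[OF M a g] R by blast
    next
      case True
      then obtain j where "j \<ge> 1" "a (j - 1) > 0" "per (wminus (pref a j)) \<in> V M"
        "\<not> lex_less (wapp (pref a j) (per (wplus (wbar M (pref a j))))) a"
        using ni unfolding irreducible_seq_def by blast
      then show False using dir2_V[OF M a] R by blast
    qed
  qed
qed


definition Dg :: "nat \<Rightarrow> real \<Rightarrow> real \<Rightarrow> nat" where
  "Dg M q t = min M (nat \<lceil>q * t\<rceil> - 1)"

fun Tg :: "nat \<Rightarrow> real \<Rightarrow> nat \<Rightarrow> real" where
  "Tg M q 0 = 1"
| "Tg M q (Suc n) = q * Tg M q n - real (Dg M q (Tg M q n))"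

definition dg :: "nat \<Rightarrow> real \<Rightarrow> nat \<Rightarrow> nat" where
  "dg M q n = Dg M q (Tg M q n)"

lemma Dg_props:
  assumes q: "1 < q" "q \<le> real M + 1" and t: "0 < t" "t \<le> 1"
  shows "Dg M q t \<le> M" "real (Dg M q t) < q * t" "Dg M q t < M \<Longrightarrow> q * t \<le> real (Dg M q t) + 1"
    "0 < q * t - real (Dg M q t)" "q * t - real (Dg M q t) \<le> 1"
proof -
  have qt: "0 < q * t" using q t by simp
  then have c1: "\<lceil>q * t\<rceil> \<ge> 1" by (simp add: ceiling_less_iff not_less[symmetric])
  have n1: "nat \<lceil>q * t\<rceil> \<ge> 1" using c1 by linarith
  have "real (nat \<lceil>q * t\<rceil> - 1) = real (nat \<lceil>q * t\<rceil>) - 1" using n1 by (simp add: of_nat_diff)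
  moreover have "real (nat \<lceil>q * t\<rceil>) = real_of_int \<lceil>q * t\<rceil>" using c1 by simp
  ultimately have e: "real (nat \<lceil>q * t\<rceil> - 1) = real_of_int \<lceil>q * t\<rceil> - 1" by simp
  have l: "real_of_int \<lceil>q * t\<rceil> - 1 < q * t" by linarith
  have u: "q * t \<le> real_of_int \<lceil>q * t\<rceil>" by simp
  show "Dg M q t \<le> M" unfolding Dg_def by simp
  have "real (Dg M q t) \<le> real (nat \<lceil>q * t\<rceil> - 1)" unfolding Dg_def by simp
  then show lt: "real (Dg M q t) < q * t" using e l by linarith
  show "Dg M q t < M \<Longrightarrow> q * t \<le> real (Dg M q t) + 1"
  proof -
    assume "Dg M q t < M"
    then have "Dg M q t = nat \<lceil>q * t\<rceil> - 1" unfolding Dg_def by simp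
    then show ?thesis using e u by simp
  qed
  show "0 < q * t - real (Dg M q t)" using lt by simp
  show "q * t - real (Dg M q t) \<le> 1"
  proof (cases "Dg M q t < M")
    case True
    then have "Dg M q t = nat \<lceil>q * t\<rceil> - 1" unfolding Dg_def by simp
    then show ?thesis using e u by simp
  next
    case False
    then have "Dg M q t = M" unfolding Dg_def by simp
    moreover have "q * t \<le> q" using q t by simp
    then have "q * t - real M \<le> 1" using q by linarith
    ultimately show ?thesis by simp
  qed
qed

context
  fixes M :: nat and q :: real
  assumes q1: "1 < q" and qM: "q \<le> real M + 1"
begin

lemma Tg_bounds: "0 < Tg M q n \<and> Tg M q n \<le> 1"
proof (induction n)
  case 0 then show ?case by simp
next
  case (Suc n) then show ?case using Dg_props[OF q1 qM] by simp
qed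

lemma dg_props: "dg M q n \<le> M" "real (dg M q n) < q * Tg M q n"
    "dg M q n < M \<Longrightarrow> q * Tg M q n \<le> real (dg M q n) + 1"
  unfolding dg_def using Dg_props[OF q1 qM] Tg_bounds[of n] by auto

lemma Tg_Suc: "Tg M q (Suc n) = q * Tg M q n - real (dg M q n)"
  unfolding dg_def by simp

lemma dg_psum: "(\<Sum>i<n. real (dg M q i) / q ^ Suc i) = 1 - Tg M q n / q ^ n"
proof (induction n)
  case 0 then show ?case by simp
next
  case (Suc n)
  have qp: "q ^ n > 0" using q1 by simp
  have "(\<Sum>i<Suc n. real (dg M q i) / q ^ Suc i) = 1 - Tg M q n / q ^ n + real (dg M q n) / q ^ Suc n"
    using Suc by simp
  also have "\<dots> = 1 - Tg M q (Suc n) / q ^ Suc n"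
    unfolding Tg_Suc using qp q1 by (simp add: field_simps)
  finally show ?case .
qed

lemma dg_window: "Tg M q n = (\<Sum>i<K. real (dg M q (n + i)) / q ^ Suc i) + Tg M q (n + K) / q ^ K"
proof (induction K)
  case 0 then show ?case by simp
next
  case (Suc K)
  have qp: "q ^ K > 0" using q1 by simp
  have "Tg M q (n + K) / q ^ K = real (dg M q (n + K)) / q ^ Suc K + Tg M q (n + Suc K) / q ^ Suc K"
    using Tg_Suc[of "n + K"] qp q1 by (simp add: field_simps)
  then show ?case using Suc by simp
qed

lemma dg_seqs: "dg M q \<in> seqs M" unfolding seqs_def using dg_props(1) by auto

lemma dg_psum_lt: "(\<Sum>i<n. real (dg M q i) / q ^ Suc i) < 1"
  unfolding dg_psum using Tg_bounds[of n] q1 by simp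

lemma dg_sums: "(\<lambda>i. real (dg M q i) / q ^ Suc i) sums 1"
  unfolding sums_def
proof -
  have z: "(\<lambda>n. Tg M q n / q ^ n) \<longlonglongrightarrow> 0"
  proof (rule tendsto_sandwich[of "\<lambda>_. 0" _ _ "\<lambda>n. (1/q) ^ n"])
    show "\<forall>\<^sub>F n in sequentially. 0 \<le> Tg M q n / q ^ n" using Tg_bounds q1 by (auto intro!: always_eventually less_imp_le)
    show "\<forall>\<^sub>F n in sequentially. Tg M q n / q ^ n \<le> (1/q) ^ n"
      using Tg_bounds q1 by (auto intro!: always_eventually simp: power_one_over divide_right_mono)
    show "(\<lambda>n. (1/q) ^ n) \<longlonglongrightarrow> 0" using q1 by (intro LIMSEQ_power_zero) simp
  qed simp
  have "(\<lambda>n. 1 - Tg M q n / q ^ n) \<longlonglongrightarrow> 1 - 0" by (intro tendsto_diff z tendsto_const)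
  then show "(\<lambda>n. \<Sum>i<n. real (dg M q i) / q ^ Suc i) \<longlonglongrightarrow> 1" unfolding dg_psum by simp
qed

lemma dg_noz: "noz (dg M q)"
  unfolding noz_def
proof (rule ccontr)
  assume "\<not> (\<forall>n. \<exists>i\<ge>n. dg M q i \<noteq> 0)"
  then obtain n where z: "\<And>i. i \<ge> n \<Longrightarrow> dg M q i = 0" by auto
  have p: "Tg M q (n + k) = q ^ k * Tg M q n" for k
  proof (induction k)
    case 0 then show ?case by simp
  next
    case (Suc k) then show ?case using Tg_Suc[of "n + k"] z[of "n + k"] by simp
  qed
  have tp: "Tg M q n > 0" using Tg_bounds by blast
  obtain k where "1 / Tg M q n < q ^ k" using real_arch_pow[OF q1] by blast
  then have "1 < q ^ k * Tg M q n" using tp by (simp add: field_simps)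
  then show False using p[of k] Tg_bounds[of "n + k"] by simp
qed

lemma lexmax:
  assumes c: "c \<in> seqs M" and ps: "\<And>n. (\<Sum>i<n. real (c i) / q ^ Suc i) < 1"
  shows "lex_le c (dg M q)"
proof (rule ccontr)
  assume "\<not> lex_le c (dg M q)"
  then have "lex_less (dg M q) c" using lex_le_iff_not_less by blast
  then obtain n where n: "\<forall>i<n. dg M q i = c i" "dg M q n < c n" unfolding lex_less_def by blast
  have "dg M q n < M" using n(2) seqsD[OF c, of n] by simp
  then have "q * Tg M q n \<le> real (dg M q n) + 1" by (rule dg_props(3))
  also have "\<dots> \<le> real (c n)" using n(2) by simp
  finally have cn: "q * Tg M q n \<le> real (c n)" .
  have qp: "q ^ n > 0" using q1 by simp
  have "(\<Sum>i<Suc n. real (c i) / q ^ Suc i) = (\<Sum>i<n. real (dg M q i) / q ^ Suc i) + real (c n) / q ^ Suc n"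
    using n(1) by simp
  also have "\<dots> = 1 - Tg M q n / q ^ n + real (c n) / q ^ Suc n" unfolding dg_psum ..
  also have "\<dots> \<ge> 1 - Tg M q n / q ^ n + q * Tg M q n / q ^ Suc n"
  proof -
    have "q * Tg M q n / q ^ Suc n \<le> real (c n) / q ^ Suc n" using cn qp q1 by (intro divide_right_mono) auto
    then show ?thesis by linarith
  qed
  also have "1 - Tg M q n / q ^ n + q * Tg M q n / q ^ Suc n = 1" using qp q1 by simp
  finally show False using ps[of "Suc n"] by simp
qed

lemma dg_shift: "lex_le (shift n (dg M q)) (dg M q)"
proof (rule ccontr)
  assume "\<not> lex_le (shift n (dg M q)) (dg M q)"
  then have "lex_less (dg M q) (shift n (dg M q))" using lex_le_iff_not_less by blast
  then obtain k where k: "\<forall>i<k. dg M q i = dg M q (i + n)" "dg M q k < dg M q (k + n)"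
    unfolding lex_less_def by auto
  have "dg M q k < M" using k(2) dg_props(1)[of "k+n"] by simp
  then have "q * Tg M q k \<le> real (dg M q k) + 1" by (rule dg_props(3))
  also have "\<dots> \<le> real (dg M q (n + k))" using k(2) by (simp add: add.commute)
  finally have ck: "q * Tg M q k \<le> real (dg M q (n + k))" .
  have qp: "q ^ k > 0" using q1 by simp
  have "(\<Sum>i<k. real (dg M q (n + i)) / q ^ Suc i) = (\<Sum>i<k. real (dg M q i) / q ^ Suc i)"
    using k(1) by (intro sum.cong) (auto simp: add.commute)
  then have e: "Tg M q n = (1 - Tg M q k / q ^ k) + real (dg M q (n + k)) / q ^ Suc k + Tg M q (n + Suc k) / q ^ Suc k"
    using dg_window[of n "Suc k"] unfolding dg_psum by simp
  have p1: "Tg M q (n + Suc k) / q ^ Suc k > 0"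
    using Tg_bounds[of "n + Suc k"] qp q1 by simp
  have p2: "q * Tg M q k / q ^ Suc k \<le> real (dg M q (n + k)) / q ^ Suc k" using ck qp q1 by (intro divide_right_mono) auto
  have p3: "q * Tg M q k / q ^ Suc k = Tg M q k / q ^ k" using qp q1 by simp
  have "Tg M q n > 1" using e p1 p2 p3 by linarith
  then show False using Tg_bounds[of n] by simp
qed

end


lemma geo_sums: assumes "1 < (q::real)" shows "(\<lambda>i. c / q ^ Suc i) sums (c / (q - 1))"
proof -
  have "(\<lambda>n. (1/q) ^ n) sums (1 / (1 - 1/q))" using assms by (intro geometric_sums) simp
  then have "(\<lambda>n. (c/q) * (1/q) ^ n) sums ((c/q) * (1 / (1 - 1/q)))" by (rule sums_mult)
  moreover have "(c/q) * (1 / (1 - 1/q)) = c / (q - 1)" using assms by (simp add: field_simps)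
  moreover have "(\<lambda>n. (c/q) * (1/q) ^ n) = (\<lambda>n. c / q ^ Suc n)" by (rule ext) (simp add: power_one_over)
  ultimately show ?thesis by metis
qed

lemma qg_psum_lt:
  assumes b: "is_qg_exp M q b" and q: "1 < q"
  shows "(\<Sum>i<n. real (b i) / q ^ Suc i) < 1"
proof -
  have s: "(\<lambda>i. real (b i) / q ^ Suc i) sums 1" and nz: "\<exists>i\<ge>n. b i \<noteq> 0" using b unfolding is_qg_exp_def by auto
  then obtain i where i: "i \<ge> n" "b i \<noteq> 0" by blast
  have "(\<Sum>i<n. real (b i) / q ^ Suc i) < (\<Sum>i. real (b i) / q ^ Suc i)"
    by (rule sum_less_suminf2[OF sums_summable[OF s] _ i(1)]) (use q i(2) in auto)
  then show ?thesis using s sums_unique by fastforce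
qed

lemma alpha_eq:
  assumes q: "1 < q" "q \<le> real M + 1"
  shows "alpha M q = dg M q"
proof -
  have qd: "is_qg_exp M q (dg M q)"
    unfolding is_qg_exp_def using dg_seqs[OF q] dg_noz[OF q] dg_sums[OF q] unfolding noz_def by auto
  have mx: "\<And>b. is_qg_exp M q b \<Longrightarrow> lex_le b (dg M q)"
  proof -
    fix b assume b: "is_qg_exp M q b"
    show "lex_le b (dg M q)"
      by (rule lexmax[OF q]) (use b qg_psum_lt[OF b q(1)] in \<open>auto simp: is_qg_exp_def\<close>)
  qed
  show ?thesis unfolding alpha_def
  proof (rule the_equality)
    show "is_qg_exp M q (dg M q) \<and> (\<forall>b. is_qg_exp M q b \<longrightarrow> lex_le b (dg M q))" using qd mx by blast
  next
    fix a assume "is_qg_exp M q a \<and> (\<forall>b. is_qg_exp M q b \<longrightarrow> lex_le b a)"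
    then show "a = dg M q" using qd mx lex_le_antisym by blast
  qed
qed

lemma alpha_facts:
  assumes q: "1 < q" "q \<le> real M + 1"
  shows "Qs M (alpha M q)" "noz (alpha M q)" "(\<lambda>i. real (alpha M q i) / q ^ Suc i) sums 1"
    "alpha M q \<in> seqs M"
  unfolding alpha_eq[OF q] Qs_def using dg_seqs[OF q] dg_shift[OF q] dg_noz[OF q] dg_sums[OF q] by auto

lemma alpha_mono:
  assumes q: "1 < q" "q < r" "r \<le> real M + 1"
  shows "lex_less (alpha M q) (alpha M r)"
proof -
  have qM: "q \<le> real M + 1" and r1: "1 < r" using q by auto
  let ?a = "alpha M q"
  have sq: "(\<lambda>i. real (?a i) / q ^ Suc i) sums 1" using alpha_facts[OF q(1) qM] by simp
  have tle: "\<And>i. real (?a i) / r ^ Suc i \<le> real (?a i) / q ^ Suc i"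
    using q by (intro divide_left_mono power_mono mult_pos_pos) auto
  have le: "lex_le ?a (alpha M r)"
    unfolding alpha_eq[OF r1 q(3)]
  proof (rule lexmax[OF r1 q(3)])
    show "?a \<in> seqs M" using alpha_facts[OF q(1) qM] by simp
  next
    fix n
    have "(\<Sum>i<n. real (?a i) / r ^ Suc i) \<le> (\<Sum>i<n. real (?a i) / q ^ Suc i)" by (intro sum_mono tle)
    also have "\<dots> < 1" unfolding alpha_eq[OF q(1) qM] by (rule dg_psum_lt[OF q(1) qM])
    finally show "(\<Sum>i<n. real (?a i) / r ^ Suc i) < 1" .
  qed
  have "?a \<noteq> alpha M r"
  proof
    assume eq: "?a = alpha M r"
    have sr: "(\<lambda>i. real (?a i) / r ^ Suc i) sums 1" using alpha_facts[OF r1 q(3)] eq by simp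
    have d: "(\<lambda>i. real (?a i) / q ^ Suc i - real (?a i) / r ^ Suc i) sums (1 - 1)" by (rule sums_diff[OF sq sr])
    obtain i where i: "?a i \<noteq> 0" using alpha_facts(2)[OF q(1) qM] unfolding noz_def by blast
    have "real (?a i) / r ^ Suc i < real (?a i) / q ^ Suc i"
      using i q by (intro divide_strict_left_mono power_strict_mono mult_pos_pos) auto
    then have "0 < (\<Sum>i. real (?a i) / q ^ Suc i - real (?a i) / r ^ Suc i)"
      by (intro suminf_pos2[OF sums_summable[OF d]]) (use tle in auto)
    then show False using d sums_unique by fastforce
  qed
  then show ?thesis using le unfolding lex_le_def by blast
qed

lemma alpha_inj:
  assumes "1 < q" "q \<le> real M + 1" "1 < r" "r \<le> real M + 1" "alpha M q = alpha M r"
  shows "q = r"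
  using alpha_mono[of q r M] alpha_mono[of r q M] assms lex_less_irrefl
  by (metis linorder_neqE_linordered_idom)


lemma tail_le1:
  assumes q: "1 < q" and a: "Qs M a" and s: "(\<lambda>i. real (a i) / q ^ Suc i) sums 1" and nz: "noz a"
  shows "q ^ k * (1 - (\<Sum>i<k. real (a i) / q ^ Suc i)) \<le> 1"
proof -
  define R where "R k = q ^ k * (1 - (\<Sum>i<k. real (a i) / q ^ Suc i))" for k
  have aseq: "a \<in> seqs M" and ash: "\<And>n. lex_le (shift n a) a" using a unfolding Qs_def by auto
  have qga: "is_qg_exp M q a" unfolding is_qg_exp_def using aseq nz s unfolding noz_def by auto
  have Rs: "(\<lambda>i. real (a (n + i)) / q ^ Suc i) sums R n" for n
  proof -
    have "(\<lambda>i. real (a (i + n)) / q ^ Suc (i + n)) sums (1 - (\<Sum>i<n. real (a i) / q ^ Suc i))"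
      using sums_split_initial_segment[OF s, of n] by simp
    then have "(\<lambda>i. q ^ n * (real (a (i + n)) / q ^ Suc (i + n))) sums R n"
      unfolding R_def by (rule sums_mult)
    moreover have "(\<lambda>i. q ^ n * (real (a (i + n)) / q ^ Suc (i + n))) = (\<lambda>i. real (a (n + i)) / q ^ Suc i)"
      using q by (intro ext) (simp add: power_add field_simps add.commute)
    ultimately show ?thesis by simp
  qed
  have Rpos: "R n > 0" for n unfolding R_def using qg_psum_lt[OF qga q, of n] q by simp
  have Rb: "R n \<le> real M / (q - 1)" for n
  proof (rule sums_le[OF _ Rs geo_sums[OF q]])
    fix i show "real (a (n + i)) / q ^ Suc i \<le> real M / q ^ Suc i"
      using seqsD[OF aseq, of "n+i"] q by (intro divide_right_mono) auto
  qed
  have R0: "R 0 = 1" unfolding R_def by simp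
  have RSuc: "R (Suc k) = q * R k - real (a k)" for k
    unfolding R_def using q by (simp add: field_simps)
  have Rwin: "R n = (\<Sum>i<K. real (a (n + i)) / q ^ Suc i) + R (n + K) / q ^ K" for n K
  proof (induction K)
    case 0 then show ?case by simp
  next
    case (Suc K)
    have qp: "q ^ K > 0" using q by simp
    have "R (n + K) / q ^ K = real (a (n + K)) / q ^ Suc K + R (n + Suc K) / q ^ Suc K"
      using RSuc[of "n + K"] qp q by (simp add: field_simps)
    then show ?case using Suc by simp
  qed
  have Req: "shift n a = a \<Longrightarrow> R n = 1" for n
  proof -
    assume e: "shift n a = a"
    have "(\<lambda>i. real (a (n + i)) / q ^ Suc i) = (\<lambda>i. real (a i) / q ^ Suc i)"
      using e by (intro ext) (metis add.commute shift_apply)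
    then show ?thesis using Rs[of n] s sums_unique2 by metis
  qed
  define B where "B = max 1 (real M / (q - 1))"
  have B1: "B \<ge> 1" unfolding B_def by simp
  have iter: "\<forall>n. R n \<le> 1 + (B - 1) / q ^ j" for j
  proof (induction j)
    case 0
    have "\<And>n. R n \<le> B" unfolding B_def using Rb by (meson max.coboundedI2)
    then show ?case by simp
  next
    case (Suc j)
    show ?case
    proof
      fix n
      have D0: "(B - 1) / q ^ j \<ge> 0" using B1 q by simp
      have "shift n a = a \<or> lex_less (shift n a) a" using ash[of n] unfolding lex_le_def by auto
      then show "R n \<le> 1 + (B - 1) / q ^ Suc j"
      proof
        assume "shift n a = a" then show ?thesis using Req B1 q by simp
      next
        assume "lex_less (shift n a) a"
        then obtain k where k: "\<forall>i<k. a (i + n) = a i" "a (k + n) < a k" unfolding lex_less_def by auto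
        have qk: "q ^ Suc k > 0" using q by simp
        have e1: "R n = (\<Sum>i<k. real (a i) / q ^ Suc i) + real (a (n + k)) / q ^ Suc k + R (n + Suc k) / q ^ Suc k"
        proof -
          have "(\<Sum>i<k. real (a (n + i)) / q ^ Suc i) = (\<Sum>i<k. real (a i) / q ^ Suc i)"
            using k(1) by (intro sum.cong) (auto simp: add.commute)
          then show ?thesis using Rwin[of n "Suc k"] by simp
        qed
        have e2: "1 = (\<Sum>i<k. real (a i) / q ^ Suc i) + real (a k) / q ^ Suc k + R (Suc k) / q ^ Suc k"
          using Rwin[of 0 "Suc k"] R0 by simp
        have ak: "real (a (n + k)) + 1 \<le> real (a k)" using k(2) by (simp add: add.commute)
        have "real (a (n + k)) / q ^ Suc k + 1 / q ^ Suc k \<le> real (a k) / q ^ Suc k"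
          using divide_right_mono[OF ak, of "q ^ Suc k"] qk by (simp add: add_divide_distrib)
        moreover have "R (Suc k) / q ^ Suc k > 0" using Rpos qk by simp
        ultimately have "R n - 1 \<le> (R (n + Suc k) - 1) / q ^ Suc k"
          using e1 e2 by (simp add: diff_divide_distrib)
        also have "\<dots> \<le> ((B - 1) / q ^ j) / q ^ Suc k"
          using Suc.IH qk by (intro divide_right_mono) (auto simp: algebra_simps)
        also have "\<dots> \<le> ((B - 1) / q ^ j) / q"
          using D0 q self_le_power[of q "Suc k"] by (intro divide_left_mono) auto
        also have "\<dots> = (B - 1) / q ^ Suc j" by (simp add: field_simps)
        finally show ?thesis by simp
      qed
    qed
  qed
  have lim: "(\<lambda>j. 1 + (B - 1) * (1 / q) ^ j) \<longlonglongrightarrow> 1 + (B - 1) * 0"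
    using q by (intro tendsto_intros) simp
  have "R k \<le> 1"
  proof (rule LIMSEQ_le_const[OF lim[simplified]])
    show "\<exists>N. \<forall>n\<ge>N. R k \<le> 1 + (B - 1) * (1 / q) ^ n"
      using iter by (auto simp: power_one_over)
  qed
  then show ?thesis unfolding R_def .
qed


lemma alpha_eq_of_sums:
  assumes q: "1 < q" "q \<le> real M + 1" and a: "Qs M a" and nz: "noz a"
    and s: "(\<lambda>i. real (a i) / q ^ Suc i) sums 1"
  shows "alpha M q = a"
proof -
  have aseq: "a \<in> seqs M" using a unfolding Qs_def by auto
  have qga: "is_qg_exp M q a" unfolding is_qg_exp_def using aseq nz s unfolding noz_def by auto
  have le1: "lex_le a (alpha M q)"
    unfolding alpha_eq[OF q] by (rule lexmax[OF q aseq qg_psum_lt[OF qga q(1)]])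
  have le2: "lex_le (alpha M q) a"
  proof (rule ccontr)
    assume "\<not> lex_le (alpha M q) a"
    then have "lex_less a (alpha M q)" using lex_le_iff_not_less by blast
    then obtain n where n: "\<forall>i<n. a i = alpha M q i" "a n < alpha M q n" unfolding lex_less_def by blast
    let ?d = "alpha M q"
    have qp: "q ^ Suc n > 0" using q by simp
    have t: "q ^ Suc n * (1 - (\<Sum>i<Suc n. real (a i) / q ^ Suc i)) \<le> 1"
      by (rule tail_le1[OF q(1) a s nz])
    have gen: "\<And>X c. (0::real) < c \<Longrightarrow> c * X \<le> 1 \<Longrightarrow> X \<le> 1 / c"
      by (simp add: pos_le_divide_eq mult.commute)
    have t': "1 - (\<Sum>i<Suc n. real (a i) / q ^ Suc i) \<le> 1 / q ^ Suc n"
      by (rule gen[OF qp t])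
    have "(\<Sum>i<Suc n. real (?d i) / q ^ Suc i) = (\<Sum>i<n. real (a i) / q ^ Suc i) + real (?d n) / q ^ Suc n"
      using n(1) by simp
    moreover have "real (a n) / q ^ Suc n + 1 / q ^ Suc n \<le> real (?d n) / q ^ Suc n"
    proof -
      have "real (a n) + 1 \<le> real (?d n)" using n(2) by simp
      then show ?thesis using divide_right_mono[of "real (a n) + 1" "real (?d n)" "q ^ Suc n"] qp
        by (simp add: add_divide_distrib)
    qed
    ultimately have "(\<Sum>i<Suc n. real (?d i) / q ^ Suc i) \<ge> 1" using t' by simp
    moreover have "(\<Sum>i<Suc n. real (?d i) / q ^ Suc i) < 1"
      unfolding alpha_eq[OF q] by (rule dg_psum_lt[OF q])
    ultimately show False by simp
  qed
  show ?thesis using le1 le2 lex_le_antisym by blast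
qed

lemma parry:
  assumes M: "M \<ge> 1" and a: "Qs M a" and nz: "noz a" and a0: "a 0 \<ge> 1"
  shows "\<exists>q. 1 < q \<and> q \<le> real M + 1 \<and> alpha M q = a"
proof -
  have aseq: "a \<in> seqs M" using a unfolding Qs_def by auto
  have dig: "\<And>n. real (a n) \<le> real M" using seqsD[OF aseq] by simp
  define P where "P = (\<lambda>x::real. \<Sum>n. real (a n) * x ^ n)"
  have summ: "summable (\<lambda>n. real (a n) * x ^ n)" if x: "0 \<le> x" "x < 1" for x
  proof (rule summable_comparison_test)
    show "\<exists>N. \<forall>n\<ge>N. norm (real (a n) * x ^ n) \<le> real M * x ^ n"
      using x dig by (auto intro!: mult_right_mono)
    show "summable (\<lambda>n. real M * x ^ n)" using x by (intro summable_mult summable_geometric) simp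
  qed
  define f where "f = (\<lambda>q::real. (1/q) * P (1/q))"
  have fsums: "(\<lambda>i. real (a i) / q ^ Suc i) sums f q" if q: "1 < q" for q
  proof -
    have "(\<lambda>n. real (a n) * (1/q) ^ n) sums P (1/q)" unfolding P_def
      using summ[of "1/q"] q by (intro summable_sums) simp
    then have "(\<lambda>n. (1/q) * (real (a n) * (1/q) ^ n)) sums f q" unfolding f_def by (rule sums_mult)
    moreover have "(\<lambda>n. (1/q) * (real (a n) * (1/q) ^ n)) = (\<lambda>i. real (a i) / q ^ Suc i)"
      by (intro ext) (simp add: power_one_over)
    ultimately show ?thesis by simp
  qed
  have cont: "isCont f q" if q: "1 < q" for q
  proof -
    define K where "K = (1 + 1/q) / 2"
    have K: "0 \<le> K" "K < 1" "1/q < K" using q unfolding K_def by (auto simp: field_simps)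
    have "isCont P (1/q)" unfolding P_def
      by (rule isCont_powser[OF summ[OF K(1,2)]]) (use K q in simp)
    moreover have "isCont (\<lambda>q. 1/q) q" using q by (intro continuous_intros) auto
    ultimately have "isCont (\<lambda>q. P (1/q)) q" using isCont_o2 by blast
    then show ?thesis unfolding f_def using \<open>isCont (\<lambda>q. 1/q) q\<close> by (intro isCont_mult)
  qed
  have M1: "1 < real M + 1" using M by simp
  have fM: "f (real M + 1) \<le> 1"
  proof -
    have "f (real M + 1) \<le> real M / (real M + 1 - 1)"
    proof (rule sums_le[OF _ fsums[OF M1] geo_sums[OF M1]])
      fix i show "real (a i) / (real M + 1) ^ Suc i \<le> real M / (real M + 1) ^ Suc i"
        using dig[of i] by (intro divide_right_mono) auto
    qed
    then show ?thesis using M by simp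
  qed
  obtain p where p: "p \<ge> 1" "a p \<noteq> 0" using nz unfolding noz_def by blast
  define q1 where "q1 = root (Suc p) 2"
  have q1: "1 < q1" "q1 ^ Suc p = 2" unfolding q1_def
    by (simp, rule real_root_pow_pos2) auto
  have "q1 \<le> q1 ^ Suc p" by (rule self_le_power) (use q1 in auto)
  then have q12: "q1 \<le> 2" using q1(2) by simp
  have fq1: "1 \<le> f q1"
  proof -
    have s1: "summable (\<lambda>i. real (a i) / q1 ^ Suc i)" using fsums[OF q1(1)] by (rule sums_summable)
    have "(\<Sum>i\<in>{0, p}. real (a i) / q1 ^ Suc i) \<le> (\<Sum>i. real (a i) / q1 ^ Suc i)"
      by (rule sum_le_suminf[OF s1]) (use q1 in auto)
    moreover have "(\<Sum>i\<in>{0, p}. real (a i) / q1 ^ Suc i) = real (a 0) / q1 + real (a p) / 2"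
      using p q1 by simp
    moreover have "real (a 0) / q1 \<ge> 1/2"
    proof -
      have "1 / q1 \<ge> 1 / 2" using q12 q1 by (intro divide_left_mono) auto
      moreover have "real (a 0) / q1 \<ge> 1 / q1" using a0 q1 by (intro divide_right_mono) auto
      ultimately show ?thesis by linarith
    qed
    moreover have "real (a p) / 2 \<ge> 1/2" using p by simp
    ultimately show ?thesis using sums_unique[OF fsums[OF q1(1)]] by linarith
  qed
  have "\<exists>x. q1 \<le> x \<and> x \<le> real M + 1 \<and> f x = 1"
  proof (rule IVT2')
    show "f (real M + 1) \<le> 1" by (rule fM)
    show "1 \<le> f q1" by (rule fq1)
    show "q1 \<le> real M + 1" using q12 M by simp
    show "continuous_on {q1..real M + 1} f"
      by (rule continuous_at_imp_continuous_on) (use cont q1 in auto)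
  qed
  then obtain q where q: "q1 \<le> q" "q \<le> real M + 1" "f q = 1" by blast
  have q1': "1 < q" using q q1 by simp
  have "alpha M q = a"
    by (rule alpha_eq_of_sums[OF q1' q(2) a nz]) (use fsums[OF q1'] q(3) in simp)
  then show ?thesis using q1' q(2) by blast
qed

lemma the_q:
  assumes M: "M \<ge> 1" and a: "Qs M a" and nz: "noz a" and a0: "a 0 \<ge> 1"
  defines "Q \<equiv> (THE q. 1 < q \<and> q \<le> real M + 1 \<and> alpha M q = a)"
  shows "1 < Q \<and> Q \<le> real M + 1 \<and> alpha M Q = a"
proof -
  obtain q where q: "1 < q" "q \<le> real M + 1" "alpha M q = a" using parry[OF assms(1-4)] by blast
  have "\<exists>!q. 1 < q \<and> q \<le> real M + 1 \<and> alpha M q = a"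
  proof (rule ex1I[of _ q])
    show "1 < q \<and> q \<le> real M + 1 \<and> alpha M q = a" using q by blast
  next
    fix r assume "1 < r \<and> r \<le> real M + 1 \<and> alpha M r = a"
    then show "r = q" using q alpha_inj[of r M q] by auto
  qed
  then show ?thesis unfolding Q_def by (rule theI')
qed


lemma gseq_Qs: assumes M: "M \<ge> 1" shows "Qs M (gseq M)"
  unfolding Qs_def
proof (intro conjI allI)
  show "gseq M \<in> seqs M" by (rule gseq_seqs[OF M])
next
  fix n
  show "lex_le (shift n (gseq M)) (gseq M)"
  proof (cases "even M")
    case True
    then have "shift n (gseq M) = gseq M" by (intro ext) (simp add: gseq_even)
    then show ?thesis by simp
  next
    case False
    show ?thesis
    proof (cases "even n")
      case True
      then have "shift n (gseq M) = gseq M" using False by (intro ext) (simp add: gseq_odd)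
      then show ?thesis by simp
    next
      case nodd: False
      have "lex_less (shift n (gseq M)) (gseq M)"
        by (rule lex_lessI[of 0]) (use nodd False in \<open>auto simp: gseq_odd\<close>)
      then show ?thesis by (rule lex_less_imp_le)
    qed
  qed
qed

lemma gseq_0: assumes M: "M \<ge> 1" shows "gseq M (2 * n) \<ge> 1"
  using M by (cases "even M") (auto simp: gseq_even gseq_odd)

lemma gseq_noz: assumes M: "M \<ge> 1" shows "noz (gseq M)"
  unfolding noz_def
proof
  fix n show "\<exists>i\<ge>n. gseq M i \<noteq> 0" using gseq_0[OF M, of n] by (intro exI[of _ "2 * n"]) auto
qed

lemma qG_props: assumes M: "M \<ge> 1" shows "1 < qG M \<and> qG M \<le> real M + 1 \<and> alpha M (qG M) = gseq M"
proof -
  have e: "qG M = (THE q. 1 < q \<and> q \<le> real M + 1 \<and> alpha M q = gseq M)"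
    unfolding qG_def gseq_def ..
  show ?thesis unfolding e by (rule the_q[OF M gseq_Qs[OF M] gseq_noz[OF M]]) (use gseq_0[OF M, of 0] in simp)
qed

lemma qL_props: assumes M: "M \<ge> 1" and b: "b \<in> fundamental M"
  shows "1 < qL M b \<and> qL M b \<le> real M + 1 \<and> alpha M (qL M b) = per b"
  unfolding qL_def
proof (rule the_q[OF M fund_per_Qs[OF b] per_noz[OF b]])
  have "per b 0 = b!0" using fund_len[OF b] by (intro per_nth) auto
  then show "per b 0 \<ge> 1" using fund_b0_pos[OF b] by simp
qed

lemma qR_props: assumes M: "M \<ge> 1" and b: "b \<in> fundamental M"
  shows "1 < qR M b \<and> qR M b \<le> real M + 1 \<and> alpha M (qR M b) = cR M b"
proof -
  have e: "qR M b = (THE q. 1 < q \<and> q \<le> real M + 1 \<and> alpha M q = cR M b)"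
    unfolding qR_def cR_def ..
  have "cR M b 0 \<ge> 1" using fund_b0_pos[OF b] by (simp add: cR_apply[OF fund_ne[OF b]])
  then show ?thesis unfolding e by (rule the_q[OF M cR_Qs[OF b] cR_noz[OF b]])
qed

lemma alpha_less_iff:
  assumes "1 < q" "q \<le> real M + 1" "1 < r" "r \<le> real M + 1"
  shows "lex_less (alpha M q) (alpha M r) \<longleftrightarrow> q < r"
proof
  assume h: "lex_less (alpha M q) (alpha M r)"
  show "q < r"
  proof (rule ccontr)
    assume "\<not> q < r"
    then have "r = q \<or> r < q" by auto
    then show False
    proof
      assume "r = q" then show False using h lex_less_irrefl by simp
    next
      assume "r < q" then show False using alpha_mono[of r q M] assms h lex_less_asym by blast
    qed
  qed
qed (use alpha_mono assms in blast)

lemma alpha_le_iff: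
  assumes "1 < q" "q \<le> real M + 1" "1 < r" "r \<le> real M + 1"
  shows "lex_le (alpha M q) (alpha M r) \<longleftrightarrow> q \<le> r"
  using alpha_less_iff[OF assms(3,4,1,2)] lex_le_iff_not_less by (simp add: not_less)

theorem lemma2p18:
  fixes M :: nat and q :: real
  assumes "M \<ge> 1" and "qG M \<le> q" and "q \<le> real M + 1"
  shows "irreducible_seq M (alpha M q) \<longleftrightarrow>
           (\<forall>b \<in> fundamental M. \<not> (qL M b < q \<and> q \<le> qR M b))"
proof -
  note G = qG_props[OF assms(1)]
  have q1: "1 < q" using G assms(2) by simp
  note qM = assms(3)
  have Qa: "Qs M (alpha M q)" using alpha_facts[OF q1 qM] by simp
  have ga: "lex_le (gseq M) (alpha M q)"
    using alpha_le_iff[of "qG M" M q] G q1 qM assms(2) by simp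
  have eq: "(qL M b < q \<and> q \<le> qR M b) \<longleftrightarrow> (lex_less (per b) (alpha M q) \<and> lex_le (alpha M q) (cR M b))"
    if b: "b \<in> fundamental M" for b
  proof -
    note Lp = qL_props[OF assms(1) b] and Rp = qR_props[OF assms(1) b]
    have "qL M b < q \<longleftrightarrow> lex_less (per b) (alpha M q)"
      using alpha_less_iff[of "qL M b" M q] Lp q1 qM by simp
    moreover have "q \<le> qR M b \<longleftrightarrow> lex_le (alpha M q) (cR M b)"
      using alpha_le_iff[of q M "qR M b"] Rp q1 qM by simp
    ultimately show ?thesis by simp
  qed
  show ?thesis using core[OF assms(1) Qa ga] eq by simp
qed

end
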